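(* Let $H$ be a real or complex Hilbert space of dimension $n$, let $N\ge n$, let $F=\{f_i\}_{i=1}^N$ be a frame for $H$ with frame operator $S_F$, and let $\{q_i\}_{i=1}^N$ be a weight number sequence. Set $c=\max\{q_i\|S_F^{-1/2}f_i\|^2:1\le i\le N\}$, $\Upsilon_1=\{i:q_i\|S_F^{-1/2}f_i\|^2=c\}$, $\Upsilon_2=\{1,\dots,N\}\setminus\Upsilon_1$, and $H_j=\operatorname{span}\{f_i:i\in\Upsilon_j\}$ for $j=1,2$. Suppose $H_1\cap H_2=\{0\}$ and $|\Upsilon_1|\ge2$. Suppose also that for all $i\neq j$ $$\big|\langle S_F^{-1/2}f_i,S_F^{-1/2}f_j\rangle\big|=\sqrt{\frac{1}{q_iq_j}\cdot\frac{n-\sum_{k=1}^N\frac{1}{q_k^2}}{\sum_{r\ne s}\frac{1}{q_rq_s}}}.$$ Then the canonical dual $\{S_F^{-1}f_i\}_{i=1}^N$ is a 2-erasure probabilistic spectrally optimal dual of $F$.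
   Context: Inner products are linear in the first argument. A frame for $H$ is a finite sequence spanning $H$. Analysis operator: $\Theta_F f=(\langle f,f_i\rangle)_i$. Synthesis operator: $\Theta_G^*(c)=\sum_i c_ig_i$. Frame operator: $S_F=\Theta_F^*\Theta_F$. A dual of $F$ is a frame $G=\{g_i\}_{i=1}^N$ with $f=\sum_i\langle f,f_i\rangle g_i=\sum_i\langle f,g_i\rangle f_i$ for all $f$. A probability sequence satisfies $0\le p_i\le1$ and $\sum p_i=1$. Weight numbers: $q_i=\frac{\sum_j p_j}{\sum_j p_j-p_i}\cdot\frac{N-1}{n}$ (assumed well defined). For $m\in\{1,2\}$, $\mathcal{D}_m^p$ is the set of $N\times N$ diagonal matrices $D$ for which there is $\Lambda\subseteq\{1,\dots,N\}$ with $|\Lambda|=m$, $D_{ii}=q_i$ for $i\in\Lambda$ and $0$ otherwise. $\mathcal{R}_m^p(F,G)=\max\{\rho(\Theta_G^*D\Theta_F):D\in\mathcal{D}_m^p\}$, with $\rho$ the spectral radius. A dual $G$ is a 1-erasure probabilistic spectrally optimal dual of $F$ if $\mathcal{R}_1^p(F,G)=\inf\{\mathcal{R}_1^p(F,G'): G'\text{ a dual of }F\}$. A dual $G$ is a 2-erasure probabilistic spectrally optimal dual of $F$ if it is a 1-erasure probabilistic spectrally optimal dual of $F$ and $\mathcal{R}_2^p(F,G)=\inf\{\mathcal{R}_2^p(F,G'): G'\text{ a 1-erasure probabilistic spectrally optimal dual of }F\}$. The sum $\sum_{r\ne s}$ runs over ordered pairs $(r,s)$ with $r\ne s$. *)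

theory Defs
  imports "Jordan_Normal_Form.Spectral_Radius"
begin

text \<open>The n-dimensional Hilbert space H is modelled as K^n inside complex^n, where the
  scalar field K is either the reals (real Hilbert space) or all of the complex numbers.
  Inner product: v \<bullet>c w = sum of v_k * cnj (w_k), linear in the first argument.
  Sequences are indexed by 0..N-1.\<close>

definition inH :: "complex set \<Rightarrow> nat \<Rightarrow> complex vec \<Rightarrow> bool" where
  "inH K n v \<longleftrightarrow> v \<in> carrier_vec n \<and> (\<forall>k<n. v $ k \<in> K)"

definition lincomb_seq :: "nat \<Rightarrow> (nat \<Rightarrow> complex) \<Rightarrow> (nat \<Rightarrow> complex vec) \<Rightarrow> nat set \<Rightarrow> complex vec" where
  "lincomb_seq n c f A = vec n (\<lambda>k. \<Sum>i\<in>A. c i * (f i $ k))"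

definition spanK :: "complex set \<Rightarrow> nat \<Rightarrow> (nat \<Rightarrow> complex vec) \<Rightarrow> nat set \<Rightarrow> complex vec set" where
  "spanK K n f A = {lincomb_seq n c f A | c. \<forall>i\<in>A. c i \<in> K}"

definition is_frame :: "complex set \<Rightarrow> nat \<Rightarrow> nat \<Rightarrow> (nat \<Rightarrow> complex vec) \<Rightarrow> bool" where
  "is_frame K n N f \<longleftrightarrow> (\<forall>i<N. inH K n (f i)) \<and> spanK K n f {..<N} = {v. inH K n v}"

definition analysis_op :: "nat \<Rightarrow> nat \<Rightarrow> (nat \<Rightarrow> complex vec) \<Rightarrow> complex mat" where
  "analysis_op n N f = mat N n (\<lambda>(i,k). cnj (f i $ k))"

definition synthesis_op :: "nat \<Rightarrow> nat \<Rightarrow> (nat \<Rightarrow> complex vec) \<Rightarrow> complex mat" where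
  "synthesis_op n N g = mat n N (\<lambda>(k,i). g i $ k)"

definition frame_op :: "nat \<Rightarrow> nat \<Rightarrow> (nat \<Rightarrow> complex vec) \<Rightarrow> complex mat" where
  "frame_op n N f = synthesis_op n N f * analysis_op n N f"

definition is_dual :: "complex set \<Rightarrow> nat \<Rightarrow> nat \<Rightarrow> (nat \<Rightarrow> complex vec) \<Rightarrow> (nat \<Rightarrow> complex vec) \<Rightarrow> bool" where
  "is_dual K n N f g \<longleftrightarrow> is_frame K n N g \<and>
     (\<forall>v. inH K n v \<longrightarrow> v = lincomb_seq n (\<lambda>i. v \<bullet>c f i) g {..<N}
                       \<and> v = lincomb_seq n (\<lambda>i. v \<bullet>c g i) f {..<N})"

definition prob_seq :: "nat \<Rightarrow> (nat \<Rightarrow> real) \<Rightarrow> bool" where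
  "prob_seq N p \<longleftrightarrow> (\<forall>i<N. 0 \<le> p i \<and> p i \<le> 1) \<and> (\<Sum>i<N. p i) = 1"

definition weight_num :: "nat \<Rightarrow> nat \<Rightarrow> (nat \<Rightarrow> real) \<Rightarrow> nat \<Rightarrow> real" where
  "weight_num n N p i = (\<Sum>j<N. p j) / ((\<Sum>j<N. p j) - p i) * (real N - 1) / real n"

definition Dset :: "nat \<Rightarrow> nat \<Rightarrow> (nat \<Rightarrow> real) \<Rightarrow> nat \<Rightarrow> complex mat set" where
  "Dset n N p m = {mat N N (\<lambda>(i,j). if i = j \<and> i \<in> \<Lambda> then complex_of_real (weight_num n N p i) else 0)
                   | \<Lambda>. \<Lambda> \<subseteq> {..<N} \<and> card \<Lambda> = m}"

definition Rm :: "nat \<Rightarrow> nat \<Rightarrow> (nat \<Rightarrow> real) \<Rightarrow> nat \<Rightarrow> (nat \<Rightarrow> complex vec) \<Rightarrow> (nat \<Rightarrow> complex vec) \<Rightarrow> real" where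
  "Rm n N p m f g = Max ((\<lambda>D. spectral_radius (synthesis_op n N g * D * analysis_op n N f)) ` Dset n N p m)"

definition opt1_dual :: "complex set \<Rightarrow> nat \<Rightarrow> nat \<Rightarrow> (nat \<Rightarrow> real) \<Rightarrow> (nat \<Rightarrow> complex vec) \<Rightarrow> (nat \<Rightarrow> complex vec) \<Rightarrow> bool" where
  "opt1_dual K n N p f g \<longleftrightarrow> is_dual K n N f g \<and>
     Rm n N p 1 f g = (INF g'\<in>{g'. is_dual K n N f g'}. Rm n N p 1 f g')"

definition opt2_dual :: "complex set \<Rightarrow> nat \<Rightarrow> nat \<Rightarrow> (nat \<Rightarrow> real) \<Rightarrow> (nat \<Rightarrow> complex vec) \<Rightarrow> (nat \<Rightarrow> complex vec) \<Rightarrow> bool" where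
  "opt2_dual K n N p f g \<longleftrightarrow> opt1_dual K n N p f g \<and>
     Rm n N p 2 f g = (INF g'\<in>{g'. opt1_dual K n N p f g'}. Rm n N p 2 f g')"

definition adj :: "complex mat \<Rightarrow> complex mat" where
  "adj A = mat (dim_col A) (dim_row A) (\<lambda>(i,j). cnj (A $$ (j,i)))"

definition pos_def_mat :: "nat \<Rightarrow> complex mat \<Rightarrow> bool" where
  "pos_def_mat n A \<longleftrightarrow> A \<in> carrier_mat n n \<and> adj A = A \<and>
     (\<forall>v\<in>carrier_vec n. v \<noteq> 0\<^sub>v n \<longrightarrow> Re ((A *\<^sub>v v) \<bullet>c v) > 0)"

definition mat_inv :: "nat \<Rightarrow> complex mat \<Rightarrow> complex mat" where
  "mat_inv n S = (THE B. B \<in> carrier_mat n n \<and> B * S = 1\<^sub>m n)"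

definition inv_sqrt_mat :: "nat \<Rightarrow> complex mat \<Rightarrow> complex mat" where
  "inv_sqrt_mat n S = (THE R. pos_def_mat n R \<and> R * R * S = 1\<^sub>m n)"

definition vnorm :: "complex vec \<Rightarrow> real" where
  "vnorm v = sqrt (\<Sum>k<dim_vec v. (cmod (v $ k))^2)"

end

theory Submission
  imports Defs
begin

lemma adj_carrier[simp]: "A \<in> carrier_mat m n \<Longrightarrow> adj A \<in> carrier_mat n m"
  unfolding adj_def by auto

lemma adj_dim[simp]: "dim_row (adj A) = dim_col A" "dim_col (adj A) = dim_row A"
  unfolding adj_def by auto

lemma adj_index[simp]: "i < dim_col A \<Longrightarrow> j < dim_row A \<Longrightarrow> adj A $$ (i,j) = cnj (A $$ (j,i))"
  unfolding adj_def by auto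

lemma adj_adj[simp]: "adj (adj A) = A"
  by (intro eq_matI) (auto simp: adj_def)

lemma mult_index_sum: "A \<in> carrier_mat m k \<Longrightarrow> B \<in> carrier_mat k n \<Longrightarrow> i < m \<Longrightarrow> j < n \<Longrightarrow>
  (A * B) $$ (i,j) = (\<Sum>l<k. A $$ (i,l) * B $$ (l,j))"
  by (auto simp: scalar_prod_def row_def col_def atLeast0LessThan)

lemma mult_vec_index_sum: "A \<in> carrier_mat m k \<Longrightarrow> v \<in> carrier_vec k \<Longrightarrow> i < m \<Longrightarrow>
  (A *\<^sub>v v) $ i = (\<Sum>l<k. A $$ (i,l) * v $ l)"
  by (auto simp: scalar_prod_def row_def atLeast0LessThan)

lemma row_col_sum[simp]: "A \<in> carrier_mat m k \<Longrightarrow> B \<in> carrier_mat k n \<Longrightarrow> i < m \<Longrightarrow> j < n \<Longrightarrow>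
  row A i \<bullet> col B j = (\<Sum>l<k. A $$ (i,l) * B $$ (l,j))"
  by (auto simp: scalar_prod_def row_def col_def atLeast0LessThan)

lemma row_vec_sum[simp]: "A \<in> carrier_mat m k \<Longrightarrow> v \<in> carrier_vec k \<Longrightarrow> i < m \<Longrightarrow>
  row A i \<bullet> v = (\<Sum>l<k. A $$ (i,l) * v $ l)"
  by (auto simp: scalar_prod_def row_def atLeast0LessThan)

lemma row_adj_vec_sum[simp]: "A \<in> carrier_mat m n \<Longrightarrow> w \<in> carrier_vec m \<Longrightarrow> i < n \<Longrightarrow>
  row (adj A) i \<bullet> w = (\<Sum>l<m. cnj (A $$ (l,i)) * w $ l)"
  by (auto simp: scalar_prod_def row_def adj_def atLeast0LessThan)

lemma cinner_sum: "w \<in> carrier_vec n \<Longrightarrow> v \<bullet>c w = (\<Sum>i<n. v $ i * cnj (w $ i))"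
  by (auto simp: scalar_prod_def atLeast0LessThan)

lemma adj_mult: assumes "A \<in> carrier_mat m k" "B \<in> carrier_mat k n"
  shows "adj (A * B) = adj B * adj A"
proof (rule eq_matI)
  fix i j assume ij: "i < dim_row (adj B * adj A)" "j < dim_col (adj B * adj A)"
  hence i: "i < n" and j: "j < m" using assms by auto
  have "adj (A * B) $$ (i,j) = cnj (\<Sum>l<k. A $$ (j,l) * B $$ (l,i))"
    using assms i j by (simp add: mult_index_sum)
  also have "\<dots> = (\<Sum>l<k. adj B $$ (i,l) * adj A $$ (l,j))"
    using assms i j by (auto simp: mult.commute intro!: sum.cong)
  also have "\<dots> = (adj B * adj A) $$ (i,j)"
    using assms i j by (subst mult_index_sum[of _ n k _ m]) auto
  finally show "adj (A * B) $$ (i,j) = (adj B * adj A) $$ (i,j)" .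
qed (use assms in auto)

lemma inner_adj: assumes "A \<in> carrier_mat m n" "v \<in> carrier_vec n" "w \<in> carrier_vec m"
  shows "(A *\<^sub>v v) \<bullet>c w = v \<bullet>c (adj A *\<^sub>v w)"
proof -
  have "(A *\<^sub>v v) \<bullet>c w = (\<Sum>i<m. (\<Sum>l<n. A $$ (i,l) * v $ l) * cnj (w $ i))"
    using assms by (simp add: cinner_sum[of _ m] mult_vec_index_sum)
  also have "\<dots> = (\<Sum>i<m. \<Sum>l<n. A $$ (i,l) * v $ l * cnj (w $ i))"
    by (simp add: sum_distrib_right)
  also have "\<dots> = (\<Sum>l<n. \<Sum>i<m. A $$ (i,l) * v $ l * cnj (w $ i))"
    by (rule sum.swap)
  also have "\<dots> = (\<Sum>l<n. v $ l * cnj (\<Sum>i<m. adj A $$ (l,i) * w $ i))"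
    using assms by (auto simp: sum_distrib_left mult_ac intro!: sum.cong)
  also have "\<dots> = v \<bullet>c (adj A *\<^sub>v w)"
  proof -
    have c: "adj A *\<^sub>v w \<in> carrier_vec n" by (rule mult_mat_vec_carrier[OF adj_carrier[OF assms(1)] assms(3)])
    show ?thesis using assms adj_carrier[OF assms(1)] by (simp add: cinner_sum[OF c] sum_distrib_left mult_ac)
  qed
  finally show ?thesis .
qed

lemma herm_sq_zero: assumes C: "C \<in> carrier_mat n n" and h: "adj C = C" and z: "C * C = 0\<^sub>m n n"
  shows "C = 0\<^sub>m n n"
proof (rule eq_matI)
  fix i j assume "i < dim_row (0\<^sub>m n n)" "j < dim_col (0\<^sub>m n n)"
  hence i: "i < n" and j: "j < n" by auto
  have sym: "C $$ (b,a) = cnj (C $$ (a,b))" if "a < n" "b < n" for a b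
  proof -
    have "adj C $$ (b,a) = cnj (C $$ (a,b))" using C that by simp
    thus "C $$ (b,a) = cnj (C $$ (a,b))" using h by simp
  qed
  have "(C * C) $$ (i,i) = 0" using z i by simp
  hence s1: "(\<Sum>l<n. C $$ (i,l) * C $$ (l,i)) = 0" using C i by (simp add: mult_index_sum)
  have h2: "C $$ (i,l) * C $$ (l,i) = complex_of_real ((cmod (C $$ (i,l)))^2)" if "l < n" for l
    by (simp only: sym[of i l, OF i that] complex_norm_square)
  have "(\<Sum>l<n. C $$ (i,l) * C $$ (l,i)) = (\<Sum>l<n. complex_of_real ((cmod (C $$ (i,l)))^2))"
    by (rule sum.cong[OF refl]) (use h2 in blast)
  hence "complex_of_real (\<Sum>l<n. (cmod (C $$ (i,l)))^2) = 0" using s1 by (simp only: of_real_sum)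
  hence "(\<Sum>l<n. (cmod (C $$ (i,l)))^2) = 0" by (simp only: of_real_eq_0_iff)
  hence "\<forall>l\<in>{..<n}. (cmod (C $$ (i,l)))^2 = 0"
    by (subst sum_nonneg_eq_0_iff[symmetric]) auto
  thus "C $$ (i,j) = 0\<^sub>m n n $$ (i,j)" using i j by auto
qed (use C in auto)


lemma pow_mat_add: assumes A: "A \<in> carrier_mat n n"
  shows "A ^\<^sub>m (a + b) = A ^\<^sub>m a * A ^\<^sub>m b"
proof (induction b)
  case 0
  then show ?case using A by simp
next
  case (Suc b)
  have "A ^\<^sub>m (a + Suc b) = (A ^\<^sub>m a * A ^\<^sub>m b) * A" using Suc by simp
  also have "\<dots> = A ^\<^sub>m a * (A ^\<^sub>m b * A)"
    by (rule assoc_mult_mat[of _ n n _ n _ n]) (use A in auto)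
  finally show ?case by simp
qed

lemma pow_mat_one: "A \<in> carrier_mat n n \<Longrightarrow> A ^\<^sub>m 1 = A"
  by simp

lemma adj_one[simp]: "adj (1\<^sub>m n) = 1\<^sub>m n"
  by (intro eq_matI) (auto simp: adj_def)

lemma adj_pow: assumes A: "A \<in> carrier_mat n n" and h: "adj A = A"
  shows "adj (A ^\<^sub>m k) = A ^\<^sub>m k"
proof (induction k)
  case 0
  then show ?case using A by simp
next
  case (Suc k)
  have "adj (A ^\<^sub>m Suc k) = adj (A ^\<^sub>m k * A)" by simp
  also have "\<dots> = adj A * adj (A ^\<^sub>m k)" by (rule adj_mult[of _ n n _ n]) (use A in auto)
  also have "\<dots> = A ^\<^sub>m 1 * A ^\<^sub>m k" using Suc h A by simp
  also have "\<dots> = A ^\<^sub>m (1 + k)" using pow_mat_add[OF A, of 1 k] by simp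
  also have "\<dots> = A ^\<^sub>m Suc k" by simp
  finally show ?case .
qed

lemma strict_upper_pow: assumes B: "B \<in> carrier_mat n n"
  and z: "\<And>i j. i < n \<Longrightarrow> j < n \<Longrightarrow> j \<le> i \<Longrightarrow> B $$ (i,j) = 0"
  shows "i < n \<Longrightarrow> j < n \<Longrightarrow> j < i + k \<Longrightarrow> (B ^\<^sub>m k) $$ (i,j) = 0"
proof (induction k arbitrary: i j)
  case 0
  then show ?case using B by simp
next
  case (Suc k)
  have "(B ^\<^sub>m Suc k) $$ (i,j) = (B ^\<^sub>m k * B) $$ (i,j)" by simp
  also have "\<dots> = (\<Sum>l<n. (B ^\<^sub>m k) $$ (i,l) * B $$ (l,j))"
    by (rule mult_index_sum[OF pow_carrier_mat[OF B] B]) (use Suc.prems in auto)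
  also have "\<dots> = 0"
  proof (rule sum.neutral, rule ballI)
    fix l assume l: "l \<in> {..<n}"
    show "(B ^\<^sub>m k) $$ (i,l) * B $$ (l,j) = 0"
    proof (cases "l < i + k")
      case True
      then show ?thesis using Suc.IH[of i l] Suc.prems l by simp
    next
      case False
      then show ?thesis using z[of l j] Suc.prems l by simp
    qed
  qed
  finally show ?case .
qed

lemma strict_upper_nilpotent: assumes B: "B \<in> carrier_mat n n"
  and z: "\<And>i j. i < n \<Longrightarrow> j < n \<Longrightarrow> j \<le> i \<Longrightarrow> B $$ (i,j) = 0"
  shows "B ^\<^sub>m n = 0\<^sub>m n n"
  by (rule eq_matI) (use strict_upper_pow[OF B z] B in auto)

lemma herm_pow_zero: assumes C: "C \<in> carrier_mat n n" and h: "adj C = C"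
  shows "C ^\<^sub>m k = 0\<^sub>m n n \<Longrightarrow> C = 0\<^sub>m n n"
proof (induction k rule: less_induct)
  case (less k)
  show ?case
  proof (cases k)
    case 0
    hence "1\<^sub>m n = (0\<^sub>m n n :: complex mat)" using less.prems C by simp
    hence "n = 0" by (metis index_one_mat(1) index_zero_mat(1) neq0_conv zero_neq_one)
    thus ?thesis using C by (intro eq_matI) auto
  next
    case (Suc k')
    show ?thesis
    proof (cases k')
      case 0
      then show ?thesis using less.prems C Suc by simp
    next
      case (Suc k'')
      define M where "M = C ^\<^sub>m k'"
      have M: "M \<in> carrier_mat n n" using C M_def by simp
      have hM: "adj M = M" unfolding M_def by (rule adj_pow[OF C h])
      have "M * M = C ^\<^sub>m (k' + k')" unfolding M_def by (rule pow_mat_add[OF C, symmetric])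
      also have "k' + k' = k + k''" using \<open>k = Suc k'\<close> Suc by simp
      also have "C ^\<^sub>m (k + k'') = C ^\<^sub>m k * C ^\<^sub>m k''" by (rule pow_mat_add[OF C])
      also have "\<dots> = 0\<^sub>m n n" using less.prems C by simp
      finally have "M = 0\<^sub>m n n" by (rule herm_sq_zero[OF M hM])
      thus ?thesis using less.IH[of k'] \<open>k = Suc k'\<close> unfolding M_def by simp
    qed
  qed
qed

lemma herm_nonzero_eig: assumes C: "C \<in> carrier_mat n n" and h: "adj C = C" and nz: "C \<noteq> 0\<^sub>m n n"
  shows "\<exists>\<mu> w. \<mu> \<noteq> 0 \<and> w \<in> carrier_vec n \<and> w \<noteq> 0\<^sub>v n \<and> C *\<^sub>v w = \<mu> \<cdot>\<^sub>v w"
proof -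
  obtain es where es: "char_poly C = (\<Prod>a\<leftarrow>es. [:- a, 1:])" and len: "length es = n"
    using char_poly_factorized[OF C] by auto
  show ?thesis
  proof (cases "\<exists>e\<in>set es. e \<noteq> 0")
    case True
    then obtain e where e: "e \<in> set es" "e \<noteq> 0" by auto
    have "poly (char_poly C) e = 0" unfolding es using linear_poly_root[OF e(1)] .
    hence "eigenvalue C e" using eigenvalue_root_char_poly[OF C] by simp
    then obtain w where "eigenvector C w e" unfolding eigenvalue_def by auto
    thus ?thesis using e C unfolding eigenvector_def by auto
  next
    case False
    obtain B P Q where sd: "schur_decomposition C es = (B,P,Q)" by (cases "schur_decomposition C es") auto
    from schur_decomposition[OF C es sd]
    have wit: "similar_mat_wit C B P Q" and ut: "upper_triangular B" and dg: "diag_mat B = es" by auto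
    from similar_mat_witD2[OF C wit] have B: "B \<in> carrier_mat n n" and P: "P \<in> carrier_mat n n"
      and Q: "Q \<in> carrier_mat n n" by auto
    have z: "B $$ (i,j) = 0" if "i < n" "j < n" "j \<le> i" for i j
    proof (cases "j = i")
      case True
      have "B $$ (i,i) = es ! i" using dg B that unfolding diag_mat_def by auto
      moreover have "es ! i \<in> set es" using len that by simp
      ultimately show ?thesis using False True by auto
    next
      case False
      then show ?thesis using ut B that unfolding upper_triangular_def by auto
    qed
    have "C ^\<^sub>m n = P * B ^\<^sub>m n * Q" by (rule similar_mat_wit_pow_id[OF wit])
    also have "\<dots> = 0\<^sub>m n n" using strict_upper_nilpotent[OF B z] P Q by simp
    finally have "C = 0\<^sub>m n n" by (rule herm_pow_zero[OF C h])
    with nz show ?thesis by simp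
  qed
qed


lemma adj_mult_vec_carrier[simp]: "A \<in> carrier_mat m n \<Longrightarrow> v \<in> carrier_vec m \<Longrightarrow> adj A *\<^sub>v v \<in> carrier_vec n"
  by (rule mult_mat_vec_carrier[OF adj_carrier])

lemma cinner_smult_left: fixes v w :: "complex vec" shows "v \<in> carrier_vec n \<Longrightarrow> w \<in> carrier_vec n \<Longrightarrow> (a \<cdot>\<^sub>v v) \<bullet>c w = a * (v \<bullet>c w)"
  by (simp add: cinner_sum[of w n] sum_distrib_left mult_ac)

lemma cinner_smult_right: fixes v w :: "complex vec" shows "v \<in> carrier_vec n \<Longrightarrow> w \<in> carrier_vec n \<Longrightarrow> v \<bullet>c (a \<cdot>\<^sub>v w) = cnj a * (v \<bullet>c w)"
proof -
  assume v: "v \<in> carrier_vec n" and w: "w \<in> carrier_vec n"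
  have aw: "a \<cdot>\<^sub>v w \<in> carrier_vec n" using w by simp
  show ?thesis using v w by (simp add: cinner_sum[OF aw] cinner_sum[OF w] sum_distrib_left mult_ac)
qed

lemma cinner_conj_sym: fixes v w :: "complex vec" shows "v \<in> carrier_vec n \<Longrightarrow> w \<in> carrier_vec n \<Longrightarrow> w \<bullet>c v = cnj (v \<bullet>c w)"
  by (simp add: cinner_sum[of _ n] mult.commute)

lemma cinner_self: "w \<in> carrier_vec n \<Longrightarrow> w \<bullet>c w = complex_of_real (\<Sum>i<n. (cmod (w $ i))^2)"
proof -
  assume w: "w \<in> carrier_vec n"
  have "w \<bullet>c w = (\<Sum>i<n. w $ i * cnj (w $ i))" by (rule cinner_sum[OF w])
  also have "\<dots> = (\<Sum>i<n. complex_of_real ((cmod (w $ i))^2))"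
    by (rule sum.cong[OF refl]) (simp only: complex_norm_square)
  also have "\<dots> = complex_of_real (\<Sum>i<n. (cmod (w $ i))^2)" by (simp only: of_real_sum)
  finally show ?thesis .
qed

lemma cinner_self_pos: assumes w: "w \<in> carrier_vec n" and nz: "w \<noteq> 0\<^sub>v n"
  shows "(\<Sum>i<n. (cmod (w $ i))^2) > 0"
proof -
  from nz w obtain i where i: "i < n" "w $ i \<noteq> 0" by (metis carrier_vecD eq_vecI index_zero_vec(1) index_zero_vec(2))
  have "(cmod (w $ i))^2 > 0" using i by simp
  moreover have "(cmod (w $ i))^2 \<le> (\<Sum>i<n. (cmod (w $ i))^2)"
    by (rule member_le_sum) (use i in auto)
  ultimately show ?thesis by linarith
qed

lemma herm_inner_real: assumes S: "S \<in> carrier_mat n n" and h: "adj S = S" and w: "w \<in> carrier_vec n"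
  shows "Im ((S *\<^sub>v w) \<bullet>c w) = 0"
proof -
  have Sw: "S *\<^sub>v w \<in> carrier_vec n" using S w by simp
  have "(S *\<^sub>v w) \<bullet>c w = w \<bullet>c (S *\<^sub>v w)" using inner_adj[OF S w w] h by simp
  also have "\<dots> = cnj ((S *\<^sub>v w) \<bullet>c w)" by (rule cinner_conj_sym[OF Sw w])
  finally have "(S *\<^sub>v w) \<bullet>c w = cnj ((S *\<^sub>v w) \<bullet>c w)" .
  thus ?thesis by (metis Reals_cnj_iff complex_is_Real_iff)
qed

definition orthonormal :: "nat \<Rightarrow> complex vec list \<Rightarrow> bool" where
  "orthonormal n us \<longleftrightarrow> (\<forall>u\<in>set us. u \<in> carrier_vec n) \<and>
     (\<forall>k<length us. \<forall>l<length us. us ! k \<bullet>c us ! l = (if k = l then 1 else 0))"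

definition projc :: "nat \<Rightarrow> complex vec list \<Rightarrow> complex mat" where
  "projc n us = mat n n (\<lambda>(i,j). (if i = j then 1 else 0) - (\<Sum>k<length us. us ! k $ i * cnj (us ! k $ j)))"

lemma projc_carrier[simp]: "projc n us \<in> carrier_mat n n"
  unfolding projc_def by simp

lemma projc_dim[simp]: "dim_row (projc n us) = n" "dim_col (projc n us) = n"
  unfolding projc_def by auto

lemma projc_apply: assumes w: "w \<in> carrier_vec n" and on: "orthonormal n us" and i: "i < n"
  shows "(projc n us *\<^sub>v w) $ i = w $ i - (\<Sum>k<length us. (w \<bullet>c us ! k) * us ! k $ i)"
proof -
  have uk: "\<And>k. k < length us \<Longrightarrow> us ! k \<in> carrier_vec n" using on unfolding orthonormal_def by auto
  have "(projc n us *\<^sub>v w) $ i = (\<Sum>j<n. ((if i = j then 1 else 0) - (\<Sum>k<length us. us ! k $ i * cnj (us ! k $ j))) * w $ j)"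
    using w i by (simp add: projc_def scalar_prod_def atLeast0LessThan)
  also have "\<dots> = (\<Sum>j<n. (if i = j then 1 else 0) * w $ j) - (\<Sum>j<n. \<Sum>k<length us. us ! k $ i * cnj (us ! k $ j) * w $ j)"
    by (simp add: left_diff_distrib sum_subtractf sum_distrib_right)
  also have "(\<Sum>j<n. (if i = j then 1 else 0) * w $ j) = (\<Sum>j<n. (if i = j then w $ j else 0))"
    by (rule sum.cong) auto
  also have "\<dots> = w $ i" using i by simp
  also have "(\<Sum>j<n. \<Sum>k<length us. us ! k $ i * cnj (us ! k $ j) * w $ j)
     = (\<Sum>k<length us. \<Sum>j<n. us ! k $ i * cnj (us ! k $ j) * w $ j)" by (rule sum.swap)
  also have "\<dots> = (\<Sum>k<length us. (w \<bullet>c us ! k) * us ! k $ i)"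
    by (rule sum.cong[OF refl]) (simp add: cinner_sum[OF uk] sum_distrib_left sum_distrib_right mult_ac)
  finally show ?thesis .
qed

lemma projc_apply_row[simp]: assumes w: "w \<in> carrier_vec n" and on: "orthonormal n us" and i: "i < n"
  shows "row (projc n us) i \<bullet> w = w $ i - (\<Sum>k<length us. (w \<bullet>c us ! k) * us ! k $ i)"
  using projc_apply[OF w on i] w i by simp

lemma projc_orth: assumes w: "w \<in> carrier_vec n" and on: "orthonormal n us" and l: "l < length us"
  shows "(projc n us *\<^sub>v w) \<bullet>c us ! l = 0"
proof -
  have uk: "\<And>k. k < length us \<Longrightarrow> us ! k \<in> carrier_vec n" using on unfolding orthonormal_def by auto
  have ok: "\<And>k. k < length us \<Longrightarrow> us ! k \<bullet>c us ! l = (if k = l then 1 else 0)"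
    using on l unfolding orthonormal_def by auto
  have "(projc n us *\<^sub>v w) \<bullet>c us ! l = (\<Sum>i<n. (projc n us *\<^sub>v w) $ i * cnj (us ! l $ i))"
    by (rule cinner_sum[OF uk[OF l]])
  also have "\<dots> = (\<Sum>i<n. (w $ i - (\<Sum>k<length us. (w \<bullet>c us ! k) * us ! k $ i)) * cnj (us ! l $ i))"
    by (rule sum.cong[OF refl]) (simp add: w on)
  also have "\<dots> = (\<Sum>i<n. w $ i * cnj (us ! l $ i)) - (\<Sum>i<n. \<Sum>k<length us. (w \<bullet>c us ! k) * us ! k $ i * cnj (us ! l $ i))"
    by (simp add: left_diff_distrib sum_subtractf sum_distrib_right)
  also have "(\<Sum>i<n. w $ i * cnj (us ! l $ i)) = w \<bullet>c us ! l" by (rule cinner_sum[OF uk[OF l], symmetric])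
  also have "(\<Sum>i<n. \<Sum>k<length us. (w \<bullet>c us ! k) * us ! k $ i * cnj (us ! l $ i))
     = (\<Sum>k<length us. \<Sum>i<n. (w \<bullet>c us ! k) * us ! k $ i * cnj (us ! l $ i))" by (rule sum.swap)
  also have "\<dots> = (\<Sum>k<length us. (w \<bullet>c us ! k) * (us ! k \<bullet>c us ! l))"
    by (rule sum.cong[OF refl]) (simp add: cinner_sum[OF uk[OF l]] sum_distrib_left mult_ac)
  also have "\<dots> = (\<Sum>k<length us. if k = l then w \<bullet>c us ! l else 0)"
    by (rule sum.cong[OF refl]) (simp add: ok)
  also have "\<dots> = w \<bullet>c us ! l" using l by simp
  finally show ?thesis by simp
qed

lemma projc_fix: assumes w: "w \<in> carrier_vec n" and on: "orthonormal n us"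
  and o: "\<And>l. l < length us \<Longrightarrow> w \<bullet>c us ! l = 0"
  shows "projc n us *\<^sub>v w = w"
  by (rule eq_vecI) (use w on in \<open>auto simp: o\<close>)

lemma projc_adj: "adj (projc n us) = projc n us"
  by (rule eq_matI) (auto simp: projc_def adj_def mult.commute)

lemma projc_diag_sum: assumes on: "orthonormal n us"
  shows "(\<Sum>i<n. projc n us $$ (i,i)) = of_nat n - of_nat (length us)"
proof -
  have uk: "\<And>k. k < length us \<Longrightarrow> us ! k \<in> carrier_vec n" using on unfolding orthonormal_def by auto
  have ok: "\<And>k. k < length us \<Longrightarrow> us ! k \<bullet>c us ! k = 1"
    using on unfolding orthonormal_def by auto
  have "(\<Sum>i<n. projc n us $$ (i,i)) = (\<Sum>i<n. 1 - (\<Sum>k<length us. us ! k $ i * cnj (us ! k $ i)))"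
    by (rule sum.cong[OF refl]) (simp add: projc_def)
  also have "\<dots> = of_nat n - (\<Sum>i<n. \<Sum>k<length us. us ! k $ i * cnj (us ! k $ i))"
    by (simp add: sum_subtractf)
  also have "(\<Sum>i<n. \<Sum>k<length us. us ! k $ i * cnj (us ! k $ i)) = (\<Sum>k<length us. \<Sum>i<n. us ! k $ i * cnj (us ! k $ i))"
    by (rule sum.swap)
  also have "\<dots> = (\<Sum>k<length us. 1)"
    by (rule sum.cong[OF refl]) (simp add: ok cinner_sum[OF uk, symmetric])
  finally show ?thesis by simp
qed


lemma eig_step:
  assumes S: "S \<in> carrier_mat n n" and h: "adj S = S" and on: "orthonormal n us"
    and ev: "\<forall>k<length us. S *\<^sub>v us ! k = complex_of_real (lam k) \<cdot>\<^sub>v us ! k"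
    and lt: "length us < n"
  shows "\<exists>u \<mu>. u \<in> carrier_vec n \<and> u \<bullet>c u = 1 \<and> (\<forall>l<length us. u \<bullet>c us ! l = 0) \<and>
     S *\<^sub>v u = complex_of_real \<mu> \<cdot>\<^sub>v u"
proof -
  define P where "P = projc n us"
  have P: "P \<in> carrier_mat n n" unfolding P_def by simp
  have hP: "adj P = P" unfolding P_def by (rule projc_adj)
  have uk: "\<And>k. k < length us \<Longrightarrow> us ! k \<in> carrier_vec n" using on unfolding orthonormal_def by auto
  have Sorth: "(S *\<^sub>v w) \<bullet>c us ! l = 0"
    if w: "w \<in> carrier_vec n" and o: "\<forall>l<length us. w \<bullet>c us ! l = 0" and l: "l < length us" for w l
  proof -
    have "(S *\<^sub>v w) \<bullet>c us ! l = w \<bullet>c (adj S *\<^sub>v us ! l)" by (rule inner_adj[OF S w uk[OF l]])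
    also have "\<dots> = w \<bullet>c (complex_of_real (lam l) \<cdot>\<^sub>v us ! l)" using h ev l by simp
    also have "\<dots> = cnj (complex_of_real (lam l)) * (w \<bullet>c us ! l)" by (rule cinner_smult_right[OF w uk[OF l]])
    also have "\<dots> = 0" using o l by simp
    finally show ?thesis .
  qed
  have key: "\<exists>w \<mu>. w \<in> carrier_vec n \<and> w \<noteq> 0\<^sub>v n \<and> (\<forall>l<length us. w \<bullet>c us ! l = 0) \<and> S *\<^sub>v w = \<mu> \<cdot>\<^sub>v w"
  proof (cases "P * S * P = 0\<^sub>m n n")
    case True
    have "\<exists>j<n. P *\<^sub>v unit_vec n j \<noteq> 0\<^sub>v n"
    proof (rule ccontr)
      assume "\<not> (\<exists>j<n. P *\<^sub>v unit_vec n j \<noteq> 0\<^sub>v n)"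
      hence z: "\<And>j. j < n \<Longrightarrow> P *\<^sub>v unit_vec n j = 0\<^sub>v n" by auto
      have "P $$ (i,i) = 0" if i: "i < n" for i
      proof -
        have "(P *\<^sub>v unit_vec n i) $ i = 0" using z[OF i] i by simp
        moreover have "(P *\<^sub>v unit_vec n i) $ i = P $$ (i,i)" using P i by (simp add: row_def)
        ultimately show ?thesis by simp
      qed
      hence "(\<Sum>i<n. P $$ (i,i)) = 0" by simp
      hence "(of_nat n :: complex) = of_nat (length us)" using projc_diag_sum[OF on] unfolding P_def by simp
      hence "n = length us" by (simp only: of_nat_eq_iff)
      thus False using lt by simp
    qed
    then obtain j where j: "j < n" and nz: "P *\<^sub>v unit_vec n j \<noteq> 0\<^sub>v n" by auto
    define w where "w = P *\<^sub>v unit_vec n j"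
    have w: "w \<in> carrier_vec n" unfolding w_def using P by simp
    have o: "\<forall>l<length us. w \<bullet>c us ! l = 0" unfolding w_def P_def
      using projc_orth[OF _ on] by simp
    have Pw: "P *\<^sub>v w = w" unfolding P_def by (rule projc_fix[OF w on]) (use o in auto)
    have Sw: "S *\<^sub>v w \<in> carrier_vec n" using S w by simp
    have PSw: "P *\<^sub>v (S *\<^sub>v w) = S *\<^sub>v w" unfolding P_def
      by (rule projc_fix[OF Sw on]) (use Sorth[OF w o] in auto)
    have "(P * S * P) *\<^sub>v w = (P * S) *\<^sub>v (P *\<^sub>v w)" by (rule assoc_mult_mat_vec[of _ n n _ n]) (use P S w in auto)
    also have "\<dots> = P *\<^sub>v (S *\<^sub>v (P *\<^sub>v w))" by (rule assoc_mult_mat_vec[of _ n n _ n]) (use P S w in auto)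
    finally have PSP: "(P * S * P) *\<^sub>v w = P *\<^sub>v (S *\<^sub>v (P *\<^sub>v w))" .
    moreover have "0\<^sub>m n n *\<^sub>v w = 0\<^sub>v n" using w by (intro eq_vecI) auto
    ultimately have "S *\<^sub>v w = 0\<^sub>v n" using True Pw PSw w by simp
    hence "S *\<^sub>v w = 0 \<cdot>\<^sub>v w" using w by auto
    thus ?thesis using w nz o unfolding w_def by blast
  next
    case False
    define C where "C = P * S * P"
    have C: "C \<in> carrier_mat n n" unfolding C_def using P S by simp
    have hC: "adj C = C"
    proof -
      have "adj C = adj P * adj (P * S)" unfolding C_def by (rule adj_mult[of _ n n _ n]) (use P S in auto)
      also have "adj (P * S) = adj S * adj P" by (rule adj_mult[of _ n n _ n]) (use P S in auto)
      finally have "adj C = P * (S * P)" using h hP by simp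
      thus ?thesis unfolding C_def using P S by simp
    qed
    from herm_nonzero_eig[OF C hC False[folded C_def]] obtain \<mu> w where
      mu: "\<mu> \<noteq> 0" and w: "w \<in> carrier_vec n" and nz: "w \<noteq> 0\<^sub>v n" and Cw: "C *\<^sub>v w = \<mu> \<cdot>\<^sub>v w" by auto
    define x where "x = S *\<^sub>v (P *\<^sub>v w)"
    have x: "x \<in> carrier_vec n" unfolding x_def using S P w by simp
    have Cw2: "C *\<^sub>v w = P *\<^sub>v x"
    proof -
      have "(P * S * P) *\<^sub>v w = (P * S) *\<^sub>v (P *\<^sub>v w)" by (rule assoc_mult_mat_vec[of _ n n _ n]) (use P S w in auto)
      also have "\<dots> = P *\<^sub>v (S *\<^sub>v (P *\<^sub>v w))" by (rule assoc_mult_mat_vec[of _ n n _ n]) (use P S w in auto)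
      finally show ?thesis unfolding C_def x_def .
    qed
    have weq: "w = (1 / \<mu>) \<cdot>\<^sub>v (P *\<^sub>v x)"
    proof -
      have "(1 / \<mu>) \<cdot>\<^sub>v (P *\<^sub>v x) = (1 / \<mu>) \<cdot>\<^sub>v (\<mu> \<cdot>\<^sub>v w)" using Cw Cw2 by simp
      also have "\<dots> = w" using mu by (simp add: smult_smult_assoc)
      finally show ?thesis by simp
    qed
    have o: "\<forall>l<length us. w \<bullet>c us ! l = 0"
    proof (intro allI impI)
      fix l assume l: "l < length us"
      have Px: "P *\<^sub>v x \<in> carrier_vec n" using P x by simp
      have "w \<bullet>c us ! l = (1 / \<mu>) * ((P *\<^sub>v x) \<bullet>c us ! l)"
        by (subst weq) (rule cinner_smult_left[OF Px uk[OF l]])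
      also have "(P *\<^sub>v x) \<bullet>c us ! l = 0" unfolding P_def by (rule projc_orth[OF x on l])
      finally show "w \<bullet>c us ! l = 0" by simp
    qed
    have Pw: "P *\<^sub>v w = w" unfolding P_def by (rule projc_fix[OF w on]) (use o in auto)
    have Sw: "S *\<^sub>v w \<in> carrier_vec n" using S w by simp
    have PSw: "P *\<^sub>v (S *\<^sub>v w) = S *\<^sub>v w" unfolding P_def
      by (rule projc_fix[OF Sw on]) (use Sorth[OF w o] in auto)
    have "S *\<^sub>v w = \<mu> \<cdot>\<^sub>v w" using Cw Cw2 PSw Pw unfolding x_def by simp
    thus ?thesis using w nz o by blast
  qed
  then obtain w \<mu> where w: "w \<in> carrier_vec n" and nz: "w \<noteq> 0\<^sub>v n"
    and o: "\<forall>l<length us. w \<bullet>c us ! l = 0" and Sw: "S *\<^sub>v w = \<mu> \<cdot>\<^sub>v w" by blast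
  define r where "r = (\<Sum>i<n. (cmod (w $ i))^2)"
  have r: "r > 0" unfolding r_def by (rule cinner_self_pos[OF w nz])
  have ww: "w \<bullet>c w = complex_of_real r" unfolding r_def by (rule cinner_self[OF w])
  have "(S *\<^sub>v w) \<bullet>c w = \<mu> * (w \<bullet>c w)" unfolding Sw by (rule cinner_smult_left[OF w w])
  hence "Im (\<mu> * complex_of_real r) = 0" using herm_inner_real[OF S h w] ww by simp
  hence "Im \<mu> = 0" using r by simp
  hence mu: "\<mu> = complex_of_real (Re \<mu>)" by (simp add: complex_eq_iff)
  define a where "a = complex_of_real (1 / sqrt r)"
  define u where "u = a \<cdot>\<^sub>v w"
  have u: "u \<in> carrier_vec n" unfolding u_def using w by simp
  have "u \<bullet>c u = a * (cnj a * (w \<bullet>c w))" unfolding u_def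
    by (simp add: cinner_smult_left[OF _ w] cinner_smult_right[OF w w] w)
  also have "\<dots> = complex_of_real ((1 / sqrt r) * (1 / sqrt r) * r)" unfolding a_def ww by (simp only: complex_cnj_complex_of_real of_real_mult mult.assoc)
  also have "(1 / sqrt r) * (1 / sqrt r) * r = 1" using r by (simp add: field_simps)
  finally have uu: "u \<bullet>c u = 1" by simp
  have uo: "\<forall>l<length us. u \<bullet>c us ! l = 0"
    using o uk unfolding u_def by (simp add: cinner_smult_left[OF w])
  have "S *\<^sub>v u = a \<cdot>\<^sub>v (\<mu> \<cdot>\<^sub>v w)" unfolding u_def using mult_mat_vec[OF S w] Sw by simp
  also have "\<dots> = \<mu> \<cdot>\<^sub>v u" unfolding u_def by (simp add: smult_smult_assoc mult.commute)
  finally have "S *\<^sub>v u = complex_of_real (Re \<mu>) \<cdot>\<^sub>v u" using mu by simp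
  thus ?thesis using u uu uo by blast
qed


lemma eig_basis_m: assumes S: "S \<in> carrier_mat n n" and h: "adj S = S"
  shows "m \<le> n \<Longrightarrow> \<exists>us lam. length us = m \<and> orthonormal n us \<and>
     (\<forall>k<m. S *\<^sub>v us ! k = complex_of_real (lam k) \<cdot>\<^sub>v us ! k)"
proof (induction m)
  case 0
  show ?case by (rule exI[of _ "[]"]) (auto simp: orthonormal_def)
next
  case (Suc m)
  then obtain us lam where len: "length us = m" and on: "orthonormal n us"
    and ev: "\<forall>k<m. S *\<^sub>v us ! k = complex_of_real (lam k) \<cdot>\<^sub>v us ! k" by auto
  from eig_step[OF S h on _, of lam] ev len Suc.prems obtain u \<mu> where
    u: "u \<in> carrier_vec n" and uu: "u \<bullet>c u = 1" and uo: "\<forall>l<length us. u \<bullet>c us ! l = 0"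
    and Su: "S *\<^sub>v u = complex_of_real \<mu> \<cdot>\<^sub>v u" by auto
  have uk: "\<And>k. k < length us \<Longrightarrow> us ! k \<in> carrier_vec n" using on unfolding orthonormal_def by auto
  define us' where "us' = us @ [u]"
  define lam' where "lam' = lam(m := \<mu>)"
  have nth: "\<And>k. k < Suc m \<Longrightarrow> us' ! k = (if k < m then us ! k else u)"
    unfolding us'_def using len by (auto simp: nth_append)
  have on': "orthonormal n us'"
    unfolding orthonormal_def
  proof (intro conjI allI impI ballI)
    fix v assume "v \<in> set us'" thus "v \<in> carrier_vec n" using on u unfolding us'_def orthonormal_def by auto
  next
    fix k l assume k: "k < length us'" and l: "l < length us'"
    hence k': "k < Suc m" and l': "l < Suc m" unfolding us'_def using len by auto
    show "us' ! k \<bullet>c us' ! l = (if k = l then 1 else 0)"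
    proof (cases "k < m")
      case True
      show ?thesis
      proof (cases "l < m")
        case True
        then show ?thesis using \<open>k < m\<close> nth k' l' on len unfolding orthonormal_def by auto
      next
        case False
        hence "l = m" using l' by simp
        have "us ! k \<bullet>c u = cnj (u \<bullet>c us ! k)" by (rule cinner_conj_sym[OF u uk]) (use True len in simp)
        thus ?thesis using uo True len nth[OF k'] nth[OF l'] \<open>l = m\<close> by simp
      qed
    next
      case False
      hence "k = m" using k' by simp
      show ?thesis
      proof (cases "l < m")
        case True
        then show ?thesis using uo \<open>k = m\<close> len nth[OF k'] nth[OF l'] by simp
      next
        case False
        hence "l = m" using l' by simp
        then show ?thesis using uu \<open>k = m\<close> nth[OF k'] by simp
      qed
    qed
  qed
  have ev': "\<forall>k<Suc m. S *\<^sub>v us' ! k = complex_of_real (lam' k) \<cdot>\<^sub>v us' ! k"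
  proof (intro allI impI)
    fix k assume k: "k < Suc m"
    show "S *\<^sub>v us' ! k = complex_of_real (lam' k) \<cdot>\<^sub>v us' ! k"
      using nth[OF k] ev Su k unfolding lam'_def by (cases "k < m") auto
  qed
  have "length us' = Suc m" unfolding us'_def using len by simp
  thus ?case using on' ev' by blast
qed

lemma spectral_herm: assumes S: "S \<in> carrier_mat n n" and h: "adj S = S"
  shows "\<exists>U lam. U \<in> carrier_mat n n \<and> adj U * U = 1\<^sub>m n \<and> U * adj U = 1\<^sub>m n \<and>
     (\<forall>k<n. col U k \<in> carrier_vec n \<and> S *\<^sub>v col U k = complex_of_real (lam k) \<cdot>\<^sub>v col U k) \<and>
     (\<forall>k<n. \<forall>l<n. col U k \<bullet>c col U l = (if k = l then 1 else 0))"
proof -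
  obtain us lam where len: "length us = n" and on: "orthonormal n us"
    and ev: "\<forall>k<n. S *\<^sub>v us ! k = complex_of_real (lam k) \<cdot>\<^sub>v us ! k"
    using eig_basis_m[OF S h, of n] by auto
  have uk: "\<And>k. k < length us \<Longrightarrow> us ! k \<in> carrier_vec n" using on unfolding orthonormal_def by auto
  define U where "U = mat_of_cols n us"
  have U: "U \<in> carrier_mat n n" unfolding U_def using len mat_of_cols_carrier(1)[of n us] by simp
  have col: "\<And>k. k < n \<Longrightarrow> col U k = us ! k" unfolding U_def using len uk by simp
  have UU: "adj U * U = 1\<^sub>m n"
  proof (rule eq_matI)
    fix k l assume "k < dim_row (1\<^sub>m n)" "l < dim_col (1\<^sub>m n)"
    hence k: "k < n" and l: "l < n" by auto
    have "(adj U * U) $$ (k,l) = (\<Sum>i<n. adj U $$ (k,i) * U $$ (i,l))"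
      by (rule mult_index_sum[OF adj_carrier[OF U] U k l])
    also have "\<dots> = (\<Sum>i<n. us ! l $ i * cnj (us ! k $ i))"
      using U k l len by (auto simp: U_def mat_of_cols_index mult.commute intro!: sum.cong)
    also have "\<dots> = us ! l \<bullet>c us ! k" by (rule cinner_sum[symmetric]) (use uk k len in auto)
    also have "\<dots> = 1\<^sub>m n $$ (k,l)" using on k l len unfolding orthonormal_def by auto
    finally show "(adj U * U) $$ (k,l) = 1\<^sub>m n $$ (k,l)" .
  qed (use U in auto)
  have UU2: "U * adj U = 1\<^sub>m n" by (rule mat_mult_left_right_inverse[OF adj_carrier[OF U] U UU])
  show ?thesis using U UU UU2 col ev uk len on unfolding orthonormal_def by (intro exI[of _ U] exI[of _ lam]) auto
qed


lemma mat_eq_by_basis: assumes X: "X \<in> carrier_mat n n" and Y: "Y \<in> carrier_mat n n"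
  and U: "U \<in> carrier_mat n n" and UU: "U * adj U = 1\<^sub>m n"
  and e: "\<And>k. k < n \<Longrightarrow> X *\<^sub>v col U k = Y *\<^sub>v col U k"
  shows "X = Y"
proof -
  have XU: "X * U = Y * U"
  proof (rule eq_matI)
    fix i k assume "i < dim_row (Y * U)" "k < dim_col (Y * U)"
    hence i: "i < n" and k: "k < n" using Y U by auto
    have "(X * U) $$ (i,k) = col (X * U) k $ i" using X U i k by simp
    also have "\<dots> = (X *\<^sub>v col U k) $ i" using col_mult2[OF X U k] by simp
    also have "\<dots> = (Y *\<^sub>v col U k) $ i" using e[OF k] by simp
    also have "\<dots> = col (Y * U) k $ i" using col_mult2[OF Y U k] by simp
    also have "\<dots> = (Y * U) $$ (i,k)" using Y U i k by simp
    finally show "(X * U) $$ (i,k) = (Y * U) $$ (i,k)" .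
  qed (use X Y U in auto)
  have "X = X * (U * adj U)" using X UU by simp
  also have "\<dots> = (X * U) * adj U" using X U by (simp add: assoc_mult_mat[of _ n n _ n _ n])
  also have "\<dots> = (Y * U) * adj U" using XU by simp
  also have "\<dots> = Y * (U * adj U)" using Y U by (simp add: assoc_mult_mat[of _ n n _ n _ n])
  also have "\<dots> = Y" using Y UU by simp
  finally show ?thesis .
qed

lemma pd_eig_pos: assumes pd: "pos_def_mat n S" and u: "u \<in> carrier_vec n" and uu: "u \<bullet>c u = 1"
  and Su: "S *\<^sub>v u = complex_of_real l \<cdot>\<^sub>v u"
  shows "l > 0"
proof -
  have "u \<noteq> 0\<^sub>v n"
  proof
    assume "u = 0\<^sub>v n"
    hence "u \<bullet>c u = 0" by (simp add: cinner_sum[of _ n])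
    with uu show False by simp
  qed
  hence "Re ((S *\<^sub>v u) \<bullet>c u) > 0" using pd u unfolding pos_def_mat_def by auto
  moreover have "(S *\<^sub>v u) \<bullet>c u = complex_of_real l" unfolding Su using cinner_smult_left[OF u u] uu by simp
  ultimately show ?thesis by simp
qed

lemma sum_delta_mult: fixes n :: nat shows "k < n \<Longrightarrow> (\<Sum>l<n. f l * (if l = k then 1 else 0)) = (f k :: complex)"
proof -
  assume k: "k < n"
  have "(\<Sum>l<n. f l * (if l = k then 1 else 0)) = (\<Sum>l<n. if l = k then f l else 0)"
    by (rule sum.cong) auto
  also have "\<dots> = f k" using k by (simp add: sum.delta[OF finite_lessThan])
  finally show ?thesis .
qed

lemma assoc3_vec: "A \<in> carrier_mat n n \<Longrightarrow> B \<in> carrier_mat n n \<Longrightarrow> C \<in> carrier_mat n n \<Longrightarrow> v \<in> carrier_vec n \<Longrightarrow>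
  (A * B * C) *\<^sub>v v = A *\<^sub>v (B *\<^sub>v (C *\<^sub>v v))"
proof -
  assume A: "A \<in> carrier_mat n n" and B: "B \<in> carrier_mat n n" and C: "C \<in> carrier_mat n n" and v: "v \<in> carrier_vec n"
  have "(A * B * C) *\<^sub>v v = (A * B) *\<^sub>v (C *\<^sub>v v)" by (rule assoc_mult_mat_vec[of _ n n _ n]) (use A B C v in auto)
  also have "\<dots> = A *\<^sub>v (B *\<^sub>v (C *\<^sub>v v))" by (rule assoc_mult_mat_vec[of _ n n _ n]) (use A B C v in auto)
  finally show ?thesis .
qed

lemma unit_apply_col: fixes U :: "complex mat" assumes U: "U \<in> carrier_mat n n" and k: "k < n" shows "U *\<^sub>v unit_vec n k = col U k"
proof (rule eq_vecI)
  fix i assume "i < dim_vec (col U k)"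
  hence i: "i < n" using U by simp
  have "(U *\<^sub>v unit_vec n k) $ i = (\<Sum>l<n. U $$ (i,l) * unit_vec n k $ l)"
    by (rule mult_vec_index_sum[OF U _ i]) simp
  also have "\<dots> = (\<Sum>l<n. U $$ (i,l) * (if l = k then 1 else 0))"
    by (rule sum.cong) (use k in auto)
  also have "\<dots> = U $$ (i,k)" by (rule sum_delta_mult[OF k])
  finally show "(U *\<^sub>v unit_vec n k) $ i = col U k $ i" using U i k by simp
qed (use U in simp)

lemma pd_inv_sqrt_ex1: assumes pd: "pos_def_mat n S"
  shows "\<exists>!R. pos_def_mat n R \<and> R * R * S = 1\<^sub>m n"
proof -
  have S: "S \<in> carrier_mat n n" and h: "adj S = S" using pd unfolding pos_def_mat_def by auto
  obtain U lam where U: "U \<in> carrier_mat n n" and UU1: "adj U * U = 1\<^sub>m n" and UU2: "U * adj U = 1\<^sub>m n"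
    and ev: "\<And>k. k < n \<Longrightarrow> col U k \<in> carrier_vec n \<and> S *\<^sub>v col U k = complex_of_real (lam k) \<cdot>\<^sub>v col U k"
    and on: "\<And>k l. k < n \<Longrightarrow> l < n \<Longrightarrow> col U k \<bullet>c col U l = (if k = l then 1 else 0)"
    using spectral_herm[OF S h] by blast
  have uc: "\<And>k. k < n \<Longrightarrow> col U k \<in> carrier_vec n" using ev by blast
  have Su: "\<And>k. k < n \<Longrightarrow> S *\<^sub>v col U k = complex_of_real (lam k) \<cdot>\<^sub>v col U k" using ev by blast
  have lpos: "\<And>k. k < n \<Longrightarrow> lam k > 0"
    using pd_eig_pos[OF pd uc _ Su] on by simp
  define r where "r = (\<lambda>k. 1 / sqrt (lam k))"
  have rpos: "\<And>k. k < n \<Longrightarrow> r k > 0" unfolding r_def using lpos by simp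
  have rl: "r k * r k * lam k = 1" if k: "k < n" for k
  proof -
    have "lam k > 0" using lpos k by simp
    thus ?thesis unfolding r_def by (simp add: field_simps)
  qed
  have char: "R *\<^sub>v col U k = complex_of_real (r k) \<cdot>\<^sub>v col U k"
    if R: "pos_def_mat n R" and RR: "R * R * S = 1\<^sub>m n" and k: "k < n" for R k
  proof -
    have Rc: "R \<in> carrier_mat n n" using R unfolding pos_def_mat_def by auto
    define u where "u = col U k"
    have u: "u \<in> carrier_vec n" unfolding u_def using uc[OF k] .
    define a where "a = R *\<^sub>v u"
    have a: "a \<in> carrier_vec n" unfolding a_def using Rc u by simp
    have "u = (R * R * S) *\<^sub>v u" using RR u by simp
    also have "\<dots> = R *\<^sub>v (R *\<^sub>v (S *\<^sub>v u))" by (rule assoc3_vec[OF Rc Rc S u])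
    also have "\<dots> = complex_of_real (lam k) \<cdot>\<^sub>v (R *\<^sub>v a)"
      unfolding u_def a_def using Su[OF k] Rc u mult_mat_vec by (simp add: u_def mult_mat_vec[OF Rc])
    finally have ueq: "u = complex_of_real (lam k) \<cdot>\<^sub>v (R *\<^sub>v a)" .
    have Ra: "R *\<^sub>v a = complex_of_real (r k * r k) \<cdot>\<^sub>v u"
    proof -
      have "complex_of_real (r k * r k) \<cdot>\<^sub>v u = complex_of_real (r k * r k) \<cdot>\<^sub>v (complex_of_real (lam k) \<cdot>\<^sub>v (R *\<^sub>v a))"
        using ueq by simp
      also have "\<dots> = complex_of_real (r k * r k * lam k) \<cdot>\<^sub>v (R *\<^sub>v a)" by (simp add: smult_smult_assoc)
      also have "\<dots> = R *\<^sub>v a" using rl[OF k] by simp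
      finally show ?thesis by simp
    qed
    define w where "w = a - complex_of_real (r k) \<cdot>\<^sub>v u"
    have w: "w \<in> carrier_vec n" unfolding w_def using a u by simp
    have Rw: "R *\<^sub>v w = (- complex_of_real (r k)) \<cdot>\<^sub>v w"
    proof -
      have "R *\<^sub>v w = R *\<^sub>v a - R *\<^sub>v (complex_of_real (r k) \<cdot>\<^sub>v u)"
        unfolding w_def by (rule mult_minus_distrib_mat_vec[OF Rc a]) (use u in simp)
      also have "\<dots> = complex_of_real (r k * r k) \<cdot>\<^sub>v u - complex_of_real (r k) \<cdot>\<^sub>v a"
        unfolding Ra using mult_mat_vec[OF Rc u] a_def by simp
      also have "\<dots> = (- complex_of_real (r k)) \<cdot>\<^sub>v w"
        unfolding w_def using a u by (intro eq_vecI) (auto simp: algebra_simps)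
      finally show ?thesis .
    qed
    have "w = 0\<^sub>v n"
    proof (rule ccontr)
      assume nz: "w \<noteq> 0\<^sub>v n"
      hence "Re ((R *\<^sub>v w) \<bullet>c w) > 0" using R w unfolding pos_def_mat_def by auto
      moreover have "(R *\<^sub>v w) \<bullet>c w = - complex_of_real (r k) * (w \<bullet>c w)"
        unfolding Rw by (rule cinner_smult_left[OF w w])
      moreover have "w \<bullet>c w = complex_of_real (\<Sum>i<n. (cmod (w $ i))^2)" by (rule cinner_self[OF w])
      ultimately have "Re (- complex_of_real (r k) * complex_of_real (\<Sum>i<n. (cmod (w $ i))^2)) > 0" by simp
      hence "- (r k * (\<Sum>i<n. (cmod (w $ i))^2)) > 0" by (simp only: of_real_mult[symmetric] of_real_minus[symmetric] mult_minus_left Re_complex_of_real)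
      moreover have "r k * (\<Sum>i<n. (cmod (w $ i))^2) > 0" using rpos[OF k] cinner_self_pos[OF w nz] by simp
      ultimately show False by simp
    qed
    hence "a = complex_of_real (r k) \<cdot>\<^sub>v u"
    proof -
      assume w0: "w = 0\<^sub>v n"
      show ?thesis
      proof (rule eq_vecI)
        fix i assume "i < dim_vec (complex_of_real (r k) \<cdot>\<^sub>v u)"
        hence i: "i < n" using u by simp
        have "w $ i = 0" using w0 i by simp
        thus "a $ i = (complex_of_real (r k) \<cdot>\<^sub>v u) $ i" unfolding w_def using a u i by simp
      qed (use a u in simp)
    qed
    thus ?thesis unfolding a_def u_def .
  qed
  define D where "D = mat n n (\<lambda>(i,j). if i = j then complex_of_real (r i) else 0)"
  have D: "D \<in> carrier_mat n n" unfolding D_def by simp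
  have hD: "adj D = D" unfolding D_def by (intro eq_matI) (auto simp: adj_def)
  define R0 where "R0 = U * D * adj U"
  have R0: "R0 \<in> carrier_mat n n" unfolding R0_def by (rule mult_carrier_mat[OF mult_carrier_mat[OF U D] adj_carrier[OF U]])
  have R0col: "R0 *\<^sub>v col U k = complex_of_real (r k) \<cdot>\<^sub>v col U k" if k: "k < n" for k
  proof -
    have e1: "adj U *\<^sub>v col U k = unit_vec n k"
      using col_mult2[OF adj_carrier[OF U] U k] UU1 k by simp
    have e2: "D *\<^sub>v unit_vec n k = complex_of_real (r k) \<cdot>\<^sub>v unit_vec n k"
      using k by (intro eq_vecI) (auto simp: D_def row_vec_sum)
    have "R0 *\<^sub>v col U k = U *\<^sub>v (D *\<^sub>v (adj U *\<^sub>v col U k))" unfolding R0_def by (rule assoc3_vec[OF U D adj_carrier[OF U] uc[OF k]])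
    also have "\<dots> = U *\<^sub>v (complex_of_real (r k) \<cdot>\<^sub>v unit_vec n k)" using e1 e2 by simp
    also have "\<dots> = complex_of_real (r k) \<cdot>\<^sub>v col U k" using mult_mat_vec[OF U] unit_apply_col[OF U k] by simp
    finally show ?thesis .
  qed
  have R0R0: "R0 * R0 * S = 1\<^sub>m n"
  proof (rule mat_eq_by_basis[OF _ _ U UU2])
    fix k assume k: "k < n"
    have "(R0 * R0 * S) *\<^sub>v col U k = R0 *\<^sub>v (R0 *\<^sub>v (S *\<^sub>v col U k))" by (rule assoc3_vec[OF R0 R0 S uc[OF k]])
    also have "\<dots> = complex_of_real (lam k * r k * r k) \<cdot>\<^sub>v col U k"
      using Su[OF k] R0col[OF k] mult_mat_vec[OF R0 uc[OF k]] by (simp add: smult_smult_assoc mult_mat_vec[OF R0] mult_ac)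
    also have "\<dots> = 1\<^sub>m n *\<^sub>v col U k" using rl[OF k] uc[OF k] by (simp add: mult_ac)
    finally show "(R0 * R0 * S) *\<^sub>v col U k = 1\<^sub>m n *\<^sub>v col U k" .
  qed (use R0 S in auto)
  have hR0: "adj R0 = R0"
  proof -
    have "adj R0 = adj (adj U) * adj (U * D)" unfolding R0_def by (rule adj_mult[of _ n n _ n]) (use U D in auto)
    also have "adj (U * D) = adj D * adj U" by (rule adj_mult[of _ n n _ n]) (use U D in auto)
    finally show ?thesis unfolding R0_def using hD U D assoc_mult_mat[OF U D adj_carrier[OF U]] by simp
  qed
  have pdR0: "pos_def_mat n R0"
    unfolding pos_def_mat_def
  proof (intro conjI ballI impI)
    fix v :: "complex vec" assume v: "v \<in> carrier_vec n" and nz: "v \<noteq> 0\<^sub>v n"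
    define x where "x = adj U *\<^sub>v v"
    have x: "x \<in> carrier_vec n" unfolding x_def using U v by simp
    have xnz: "x \<noteq> 0\<^sub>v n"
    proof
      assume "x = 0\<^sub>v n"
      have "v = (U * adj U) *\<^sub>v v" using UU2 v by simp
      also have "\<dots> = U *\<^sub>v x" unfolding x_def by (rule assoc_mult_mat_vec[OF U adj_carrier[OF U] v])
      also have "\<dots> = 0\<^sub>v n" using \<open>x = 0\<^sub>v n\<close> U by (intro eq_vecI) auto
      finally show False using nz by simp
    qed
    have Dx: "D *\<^sub>v x \<in> carrier_vec n" using D x by simp
    have "(R0 *\<^sub>v v) \<bullet>c v = (U *\<^sub>v (D *\<^sub>v x)) \<bullet>c v" unfolding R0_def x_def by (subst assoc3_vec[OF U D adj_carrier[OF U] v]) simp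
    also have "\<dots> = (D *\<^sub>v x) \<bullet>c x" unfolding x_def by (rule inner_adj[OF U _ v]) (use Dx x_def in simp)
    also have "\<dots> = (\<Sum>i<n. (D *\<^sub>v x) $ i * cnj (x $ i))" by (rule cinner_sum[OF x])
    also have "\<dots> = (\<Sum>i<n. complex_of_real (r i * (cmod (x $ i))^2))"
    proof (rule sum.cong[OF refl])
      fix i assume i: "i \<in> {..<n}"
      have "(D *\<^sub>v x) $ i = complex_of_real (r i) * x $ i"
      proof -
        have "(D *\<^sub>v x) $ i = (\<Sum>l<n. D $$ (i,l) * x $ l)" using D x i by (simp add: mult_vec_index_sum)
        also have "\<dots> = (\<Sum>l<n. if l = i then complex_of_real (r i) * x $ l else 0)"
          by (rule sum.cong[OF refl]) (use i in \<open>auto simp: D_def\<close>)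
        also have "\<dots> = complex_of_real (r i) * x $ i" using i by simp
        finally show ?thesis .
      qed
      note Dxi = this
      show "(D *\<^sub>v x) $ i * cnj (x $ i) = complex_of_real (r i * (cmod (x $ i))^2)"
        by (simp only: Dxi of_real_mult complex_norm_square mult.assoc)
    qed
    also have "\<dots> = complex_of_real (\<Sum>i<n. r i * (cmod (x $ i))^2)" by (simp only: of_real_sum)
    finally have eqR: "Re ((R0 *\<^sub>v v) \<bullet>c v) = (\<Sum>i<n. r i * (cmod (x $ i))^2)" by simp
    from xnz x obtain i where i: "i < n" "x $ i \<noteq> 0" by (metis carrier_vecD eq_vecI index_zero_vec(1) index_zero_vec(2))
    have "r i * (cmod (x $ i))^2 > 0" using i rpos by simp
    moreover have "r i * (cmod (x $ i))^2 \<le> (\<Sum>i<n. r i * (cmod (x $ i))^2)"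
      by (rule member_le_sum) (use i in \<open>auto intro!: mult_nonneg_nonneg less_imp_le[OF rpos]\<close>)
    ultimately show "Re ((R0 *\<^sub>v v) \<bullet>c v) > 0" using eqR by linarith
  qed (use R0 hR0 in auto)
  show ?thesis
  proof (rule ex1I[of _ R0])
    show "pos_def_mat n R0 \<and> R0 * R0 * S = 1\<^sub>m n" using pdR0 R0R0 by simp
  next
    fix R assume R: "pos_def_mat n R \<and> R * R * S = 1\<^sub>m n"
    have Rc: "R \<in> carrier_mat n n" using R unfolding pos_def_mat_def by auto
    show "R = R0"
    proof (rule mat_eq_by_basis[OF Rc R0 U UU2])
      fix k assume k: "k < n"
      show "R *\<^sub>v col U k = R0 *\<^sub>v col U k" using char[OF _ _ k] R R0col[OF k] by simp
    qed
  qed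
qed

lemma inv_sqrt_props: assumes pd: "pos_def_mat n S"
  shows "pos_def_mat n (inv_sqrt_mat n S)" "inv_sqrt_mat n S * inv_sqrt_mat n S * S = 1\<^sub>m n"
proof -
  have "pos_def_mat n (inv_sqrt_mat n S) \<and> inv_sqrt_mat n S * inv_sqrt_mat n S * S = 1\<^sub>m n"
    unfolding inv_sqrt_mat_def by (rule theI'[OF pd_inv_sqrt_ex1[OF pd]])
  thus "pos_def_mat n (inv_sqrt_mat n S)" "inv_sqrt_mat n S * inv_sqrt_mat n S * S = 1\<^sub>m n" by auto
qed


definition Kok :: "complex set \<Rightarrow> bool" where "Kok K \<longleftrightarrow> K = \<real> \<or> K = UNIV"

lemma Kok_add: "Kok K \<Longrightarrow> a \<in> K \<Longrightarrow> b \<in> K \<Longrightarrow> a + b \<in> K" unfolding Kok_def by auto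
lemma Kok_mult: "Kok K \<Longrightarrow> a \<in> K \<Longrightarrow> b \<in> K \<Longrightarrow> a * b \<in> K" unfolding Kok_def by auto
lemma Kok_diff: "Kok K \<Longrightarrow> a \<in> K \<Longrightarrow> b \<in> K \<Longrightarrow> a - b \<in> K" unfolding Kok_def by auto
lemma Kok_uminus: "Kok K \<Longrightarrow> a \<in> K \<Longrightarrow> - a \<in> K" unfolding Kok_def by auto
lemma Kok_cnj: "Kok K \<Longrightarrow> a \<in> K \<Longrightarrow> cnj a \<in> K" unfolding Kok_def by (auto simp: Reals_cnj_iff)
lemma Kok_0: "Kok K \<Longrightarrow> 0 \<in> K" unfolding Kok_def by auto
lemma Kok_1: "Kok K \<Longrightarrow> 1 \<in> K" unfolding Kok_def by auto
lemma Kok_sum: "Kok K \<Longrightarrow> (\<And>i. i \<in> A \<Longrightarrow> f i \<in> K) \<Longrightarrow> sum f A \<in> K"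
  unfolding Kok_def by auto

lemma lincomb_carrier[simp]: "lincomb_seq n c f A \<in> carrier_vec n"
  unfolding lincomb_seq_def by simp
lemma lincomb_dim[simp]: "dim_vec (lincomb_seq n c f A) = n"
  unfolding lincomb_seq_def by simp
lemma lincomb_index[simp]: "k < n \<Longrightarrow> lincomb_seq n c f A $ k = (\<Sum>i\<in>A. c i * f i $ k)"
  unfolding lincomb_seq_def by simp

lemma cinner_lincomb_left: assumes w: "w \<in> carrier_vec n"
  shows "lincomb_seq n c f A \<bullet>c w = (\<Sum>i\<in>A. c i * (f i \<bullet>c w))"
proof -
  have "lincomb_seq n c f A \<bullet>c w = (\<Sum>k<n. (\<Sum>i\<in>A. c i * f i $ k) * cnj (w $ k))"
    by (simp add: cinner_sum[OF w])
  also have "\<dots> = (\<Sum>k<n. \<Sum>i\<in>A. c i * f i $ k * cnj (w $ k))" by (simp add: sum_distrib_right)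
  also have "\<dots> = (\<Sum>i\<in>A. \<Sum>k<n. c i * f i $ k * cnj (w $ k))" by (rule sum.swap)
  also have "\<dots> = (\<Sum>i\<in>A. c i * (f i \<bullet>c w))" by (simp add: cinner_sum[OF w] sum_distrib_left mult_ac)
  finally show ?thesis .
qed

lemma cinner_lincomb_right: assumes v: "v \<in> carrier_vec n" and f: "\<And>i. i \<in> A \<Longrightarrow> f i \<in> carrier_vec n"
  shows "v \<bullet>c lincomb_seq n c f A = (\<Sum>i\<in>A. cnj (c i) * (v \<bullet>c f i))"
proof -
  have "v \<bullet>c lincomb_seq n c f A = cnj (lincomb_seq n c f A \<bullet>c v)"
    by (rule cinner_conj_sym[OF _ v]) simp
  also have "\<dots> = cnj (\<Sum>i\<in>A. c i * (f i \<bullet>c v))" by (simp add: cinner_lincomb_left[OF v])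
  also have "\<dots> = (\<Sum>i\<in>A. cnj (c i) * (v \<bullet>c f i))"
    by (auto simp: cinner_conj_sym[OF v f] intro!: sum.cong)
  finally show ?thesis .
qed

lemma mult_lincomb: assumes M: "M \<in> carrier_mat n n" and f: "\<And>i. i \<in> A \<Longrightarrow> f i \<in> carrier_vec n"
  shows "M *\<^sub>v lincomb_seq n c f A = lincomb_seq n c (\<lambda>i. M *\<^sub>v f i) A"
proof (rule eq_vecI)
  fix k assume "k < dim_vec (lincomb_seq n c (\<lambda>i. M *\<^sub>v f i) A)"
  hence k: "k < n" by simp
  have "(M *\<^sub>v lincomb_seq n c f A) $ k = (\<Sum>l<n. M $$ (k,l) * (\<Sum>i\<in>A. c i * f i $ l))"
    using M k by simp
  also have "\<dots> = (\<Sum>l<n. \<Sum>i\<in>A. M $$ (k,l) * (c i * f i $ l))" by (simp add: sum_distrib_left)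
  also have "\<dots> = (\<Sum>i\<in>A. \<Sum>l<n. M $$ (k,l) * (c i * f i $ l))" by (rule sum.swap)
  also have "\<dots> = (\<Sum>i\<in>A. c i * (M *\<^sub>v f i) $ k)"
    using M k f by (auto simp: sum_distrib_left mult_ac intro!: sum.cong)
  also have "\<dots> = lincomb_seq n c (\<lambda>i. M *\<^sub>v f i) A $ k" using k by simp
  finally show "(M *\<^sub>v lincomb_seq n c f A) $ k = lincomb_seq n c (\<lambda>i. M *\<^sub>v f i) A $ k" .
qed (use M in simp)

lemma frame_op_dim[simp]: "dim_row (frame_op n N f) = n" "dim_col (frame_op n N f) = n"
  unfolding frame_op_def synthesis_op_def analysis_op_def by simp_all

lemma frame_op_carrier[simp]: "frame_op n N f \<in> carrier_mat n n"
  unfolding carrier_mat_def by simp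

lemma frame_op_index: "k < n \<Longrightarrow> l < n \<Longrightarrow> frame_op n N f $$ (k,l) = (\<Sum>i<N. f i $ k * cnj (f i $ l))"
  unfolding frame_op_def synthesis_op_def analysis_op_def
  by (simp add: scalar_prod_def atLeast0LessThan)

lemma frame_op_adj: "adj (frame_op n N f) = frame_op n N f"
  by (rule eq_matI) (auto simp: frame_op_index mult.commute)

lemma frame_op_apply: assumes v: "v \<in> carrier_vec n" and f: "\<And>i. i < N \<Longrightarrow> f i \<in> carrier_vec n"
  shows "frame_op n N f *\<^sub>v v = lincomb_seq n (\<lambda>i. v \<bullet>c f i) f {..<N}"
proof (rule eq_vecI)
  fix k assume "k < dim_vec (lincomb_seq n (\<lambda>i. v \<bullet>c f i) f {..<N})"
  hence k: "k < n" by simp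
  have "(frame_op n N f *\<^sub>v v) $ k = (\<Sum>l<n. (\<Sum>i<N. f i $ k * cnj (f i $ l)) * v $ l)"
    using v k by (simp add: mult_vec_index_sum[OF frame_op_carrier v k] frame_op_index)
  also have "\<dots> = (\<Sum>l<n. \<Sum>i<N. f i $ k * cnj (f i $ l) * v $ l)" by (simp add: sum_distrib_right)
  also have "\<dots> = (\<Sum>i<N. \<Sum>l<n. f i $ k * cnj (f i $ l) * v $ l)" by (rule sum.swap)
  also have "\<dots> = (\<Sum>i<N. (v \<bullet>c f i) * f i $ k)"
    using f by (auto simp: cinner_sum[of _ n] sum_distrib_left sum_distrib_right mult_ac intro!: sum.cong)
  finally show "(frame_op n N f *\<^sub>v v) $ k = lincomb_seq n (\<lambda>i. v \<bullet>c f i) f {..<N} $ k" using k by simp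
qed (simp)

lemma frame_op_form: assumes v: "v \<in> carrier_vec n" and f: "\<And>i. i < N \<Longrightarrow> f i \<in> carrier_vec n"
  shows "(frame_op n N f *\<^sub>v v) \<bullet>c v = complex_of_real (\<Sum>i<N. (cmod (v \<bullet>c f i))^2)"
proof -
  note fa = frame_op_apply[OF v f]
  have "(frame_op n N f *\<^sub>v v) \<bullet>c v = (\<Sum>i<N. (v \<bullet>c f i) * (f i \<bullet>c v))"
    by (simp only: fa cinner_lincomb_left[OF v])
  also have "\<dots> = (\<Sum>i<N. complex_of_real ((cmod (v \<bullet>c f i))^2))"
  proof (rule sum.cong[OF refl])
    fix i assume "i \<in> {..<N}"
    hence cs: "f i \<bullet>c v = cnj (v \<bullet>c f i)" using cinner_conj_sym[OF v f, of i] by simp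
    show "(v \<bullet>c f i) * (f i \<bullet>c v) = complex_of_real ((cmod (v \<bullet>c f i))^2)"
      by (simp only: cs complex_norm_square)
  qed
  also have "\<dots> = complex_of_real (\<Sum>i<N. (cmod (v \<bullet>c f i))^2)" by (simp only: of_real_sum)
  finally show ?thesis .
qed

lemma cinner_unit: fixes v :: "complex vec" shows "v \<in> carrier_vec n \<Longrightarrow> k < n \<Longrightarrow> v \<bullet>c unit_vec n k = v $ k"
proof -
  assume v: "v \<in> carrier_vec n" and k: "k < n"
  have "v \<bullet>c unit_vec n k = (\<Sum>i<n. v $ i * cnj (unit_vec n k $ i))" by (rule cinner_sum) simp
  also have "\<dots> = (\<Sum>i<n. if i = k then v $ i else 0)" by (rule sum.cong) (use k in auto)
  also have "\<dots> = v $ k" using k by (simp add: sum.delta[OF finite_lessThan])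
  finally show ?thesis .
qed

lemma frame_carrier: "is_frame K n N f \<Longrightarrow> i < N \<Longrightarrow> f i \<in> carrier_vec n"
  unfolding is_frame_def inH_def by auto

lemma frame_op_pd: assumes K: "Kok K" and fr: "is_frame K n N f"
  shows "pos_def_mat n (frame_op n N f)"
  unfolding pos_def_mat_def
proof (intro conjI ballI impI)
  fix v :: "complex vec" assume v: "v \<in> carrier_vec n" and nz: "v \<noteq> 0\<^sub>v n"
  have f: "\<And>i. i < N \<Longrightarrow> f i \<in> carrier_vec n" using frame_carrier[OF fr] by auto
  have "\<exists>i<N. v \<bullet>c f i \<noteq> 0"
  proof (rule ccontr)
    assume "\<not> (\<exists>i<N. v \<bullet>c f i \<noteq> 0)"
    hence z: "\<And>i. i < N \<Longrightarrow> v \<bullet>c f i = 0" by auto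
    have "v = 0\<^sub>v n"
    proof (rule eq_vecI)
      fix k assume "k < dim_vec (0\<^sub>v n)"
      hence k: "k < n" by simp
      have "inH K n (unit_vec n k)" unfolding inH_def using K Kok_0 Kok_1 k by auto
      hence "unit_vec n k \<in> spanK K n f {..<N}" using fr unfolding is_frame_def by auto
      then obtain c where e: "unit_vec n k = lincomb_seq n c f {..<N}" unfolding spanK_def by auto
      have "v \<bullet>c unit_vec n k = (\<Sum>i<N. cnj (c i) * (v \<bullet>c f i))"
        unfolding e by (rule cinner_lincomb_right[OF v]) (use f in auto)
      also have "\<dots> = 0" using z by simp
      finally have "v \<bullet>c unit_vec n k = 0" .
      moreover have "v \<bullet>c unit_vec n k = v $ k" by (rule cinner_unit[OF v k])
      ultimately show "v $ k = 0\<^sub>v n $ k" using k by simp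
    qed (use v in simp)
    thus False using nz by simp
  qed
  then obtain i where i: "i < N" "v \<bullet>c f i \<noteq> 0" by auto
  have "(cmod (v \<bullet>c f i))^2 > 0" using i by simp
  moreover have "(cmod (v \<bullet>c f i))^2 \<le> (\<Sum>i<N. (cmod (v \<bullet>c f i))^2)"
    by (rule member_le_sum) (use i in auto)
  ultimately have "(\<Sum>i<N. (cmod (v \<bullet>c f i))^2) > 0" by linarith
  thus "Re ((frame_op n N f *\<^sub>v v) \<bullet>c v) > 0" using frame_op_form[where N=N and f=f, OF v f] by simp
qed (auto simp: frame_op_adj)


locale fctx =
  fixes K :: "complex set" and n N :: nat and f :: "nat \<Rightarrow> complex vec"
  assumes K: "Kok K" and fr: "is_frame K n N f"
begin

definition "S = frame_op n N f"
definition "R = inv_sqrt_mat n S"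
definition "Si = mat_inv n S"
definition "g i = Si *\<^sub>v f i"

lemma fc: "i < N \<Longrightarrow> f i \<in> carrier_vec n" by (rule frame_carrier[OF fr])

lemma fK: "i < N \<Longrightarrow> k < n \<Longrightarrow> f i $ k \<in> K"
  using fr unfolding is_frame_def inH_def by auto

lemma Sc: "S \<in> carrier_mat n n" unfolding S_def by simp
lemma Spd: "pos_def_mat n S" unfolding S_def by (rule frame_op_pd[OF K fr])
lemma Sh: "adj S = S" unfolding S_def by (rule frame_op_adj)

lemma Rpd: "pos_def_mat n R" unfolding R_def by (rule inv_sqrt_props(1)[OF Spd])
lemma RRS: "R * R * S = 1\<^sub>m n" unfolding R_def by (rule inv_sqrt_props(2)[OF Spd])
lemma Rc: "R \<in> carrier_mat n n" using Rpd unfolding pos_def_mat_def by auto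
lemma Rh: "adj R = R" using Rpd unfolding pos_def_mat_def by auto

lemma RRc: "R * R \<in> carrier_mat n n" using Rc by simp

lemma SRR: "S * (R * R) = 1\<^sub>m n"
  by (rule mat_mult_left_right_inverse[OF RRc Sc RRS])

lemma Si_eq: "Si = R * R"
proof -
  have ex: "\<exists>!B. B \<in> carrier_mat n n \<and> B * S = 1\<^sub>m n"
  proof (rule ex1I[of _ "R * R"])
    show "R * R \<in> carrier_mat n n \<and> R * R * S = 1\<^sub>m n" using RRc RRS by simp
  next
    fix B assume B: "B \<in> carrier_mat n n \<and> B * S = 1\<^sub>m n"
    have Bc: "B \<in> carrier_mat n n" using B by simp
    have "B = B * (S * (R * R))" using B SRR right_mult_one_mat[of B n n] by simp
    also have "\<dots> = (B * S) * (R * R)" using B Sc RRc assoc_mult_mat[of B n n S n "R * R" n] by simp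
    also have "\<dots> = R * R" using B RRc left_mult_one_mat[OF RRc] by simp
    finally show "B = R * R" .
  qed
  have "Si \<in> carrier_mat n n \<and> Si * S = 1\<^sub>m n" unfolding Si_def mat_inv_def by (rule theI'[OF ex])
  with ex show ?thesis using RRc RRS by blast
qed

lemma Sic: "Si \<in> carrier_mat n n" unfolding Si_eq by (rule RRc)
lemma SiS: "Si * S = 1\<^sub>m n" unfolding Si_eq by (rule RRS)
lemma SSi: "S * Si = 1\<^sub>m n" unfolding Si_eq by (rule SRR)
lemma Sih: "adj Si = Si" unfolding Si_eq using adj_mult[OF Rc Rc] Rh by simp

lemma gc: "g i \<in> carrier_vec n" unfolding g_def carrier_vec_def using Sic by simp

lemma Si_left_unique: assumes B: "B \<in> carrier_mat n n" and BS: "B * S = 1\<^sub>m n" shows "B = Si"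
proof -
  have "B = B * (S * Si)" using B SSi by simp
  also have "\<dots> = (B * S) * Si" using B Sc Sic by (simp add: assoc_mult_mat[of _ n n _ n _ n])
  also have "\<dots> = Si" using BS Sic by simp
  finally show ?thesis .
qed

lemma g_f_inner: assumes i: "i < N" and j: "j < N"
  shows "g j \<bullet>c f i = (R *\<^sub>v f j) \<bullet>c (R *\<^sub>v f i)"
proof -
  have "g j = R *\<^sub>v (R *\<^sub>v f j)" unfolding g_def Si_eq using Rc fc[OF j] by simp
  hence "g j \<bullet>c f i = (R *\<^sub>v (R *\<^sub>v f j)) \<bullet>c f i" by simp
  also have "\<dots> = (R *\<^sub>v f j) \<bullet>c (adj R *\<^sub>v f i)"
    by (rule inner_adj[OF Rc _ fc[OF i]]) (use Rc fc[OF j] in simp)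
  finally show ?thesis using Rh by simp
qed

lemma g_f_sym: assumes i: "i < N" and j: "j < N"
  shows "g i \<bullet>c f j = cnj (g j \<bullet>c f i)"
proof -
  have a: "R *\<^sub>v f i \<in> carrier_vec n" "R *\<^sub>v f j \<in> carrier_vec n" using Rc fc i j by auto
  show ?thesis unfolding g_f_inner[OF i j] g_f_inner[OF j i] by (rule cinner_conj_sym[OF a(2) a(1)])
qed

lemma vnorm_sq: "v \<in> carrier_vec n \<Longrightarrow> (vnorm v)^2 = (\<Sum>k<n. (cmod (v $ k))^2)"
  unfolding vnorm_def by (simp add: sum_nonneg)

lemma g_f_diag: assumes i: "i < N"
  shows "g i \<bullet>c f i = complex_of_real ((vnorm (R *\<^sub>v f i))^2)"
proof -
  have a: "R *\<^sub>v f i \<in> carrier_vec n" using Rc fc i by auto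
  show ?thesis unfolding g_f_inner[OF i i] vnorm_sq[OF a] by (rule cinner_self[OF a])
qed

lemma S_real_entries: assumes KR: "K = \<real>" and k: "k < n" and l: "l < n"
  shows "S $$ (k,l) \<in> \<real>"
proof -
  have "S $$ (k,l) = (\<Sum>i<N. f i $ k * cnj (f i $ l))" unfolding S_def using k l by (rule frame_op_index)
  also have "\<dots> \<in> \<real>" using fK k l KR by (auto simp: Reals_cnj_iff)
  finally show ?thesis .
qed

lemma Si_K: assumes k: "k < n" and l: "l < n" shows "Si $$ (k,l) \<in> K"
proof (cases "K = UNIV")
  case True then show ?thesis by simp
next
  case False
  hence KR: "K = \<real>" using K unfolding Kok_def by auto
  define B where "B = mat n n (\<lambda>(i,j). cnj (Si $$ (i,j)))"
  have B: "B \<in> carrier_mat n n" unfolding B_def by simp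
  have "B * S = 1\<^sub>m n"
  proof (rule eq_matI)
    fix i j assume "i < dim_row (1\<^sub>m n)" "j < dim_col (1\<^sub>m n)"
    hence i: "i < n" and j: "j < n" by auto
    have "(B * S) $$ (i,j) = (\<Sum>l<n. B $$ (i,l) * S $$ (l,j))" by (rule mult_index_sum[OF B Sc i j])
    also have "\<dots> = (\<Sum>l<n. cnj (Si $$ (i,l) * S $$ (l,j)))"
      using S_real_entries[OF KR] i j by (auto simp: B_def Reals_cnj_iff intro!: sum.cong)
    also have "\<dots> = cnj ((Si * S) $$ (i,j))" using mult_index_sum[OF Sic Sc i j] by simp
    also have "\<dots> = 1\<^sub>m n $$ (i,j)" using SiS i j by simp
    finally show "(B * S) $$ (i,j) = 1\<^sub>m n $$ (i,j)" .
  qed (use B Sc in auto)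
  hence "B = Si" by (rule Si_left_unique[OF B])
  hence "cnj (Si $$ (k,l)) = Si $$ (k,l)" using k l unfolding B_def by (metis case_prod_conv index_mat(1))
  thus ?thesis using KR by (simp add: Reals_cnj_iff)
qed

lemma gK: assumes i: "i < N" and k: "k < n" shows "g i $ k \<in> K"
proof -
  have "g i $ k = (\<Sum>l<n. Si $$ (k,l) * f i $ l)" unfolding g_def using Sic fc[OF i] k by simp
  also have "\<dots> \<in> K" using K Si_K fK i k by (auto intro!: Kok_sum Kok_mult)
  finally show ?thesis .
qed

lemma inner_K: assumes v: "inH K n v" and w: "inH K n w" shows "v \<bullet>c w \<in> K"
proof -
  have "v \<bullet>c w = (\<Sum>k<n. v $ k * cnj (w $ k))" using w unfolding inH_def by (simp add: cinner_sum)
  also have "\<dots> \<in> K" using v w K unfolding inH_def by (auto intro!: Kok_sum Kok_mult Kok_cnj)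
  finally show ?thesis .
qed

lemma fH: "i < N \<Longrightarrow> inH K n (f i)" using fr unfolding is_frame_def by auto
lemma gH: "i < N \<Longrightarrow> inH K n (g i)" unfolding inH_def using gc gK by auto

lemma recon1: assumes v: "v \<in> carrier_vec n"
  shows "lincomb_seq n (\<lambda>i. v \<bullet>c f i) g {..<N} = v"
proof -
  have "lincomb_seq n (\<lambda>i. v \<bullet>c f i) g {..<N} = Si *\<^sub>v lincomb_seq n (\<lambda>i. v \<bullet>c f i) f {..<N}"
    unfolding g_def by (rule mult_lincomb[OF Sic, symmetric]) (use fc in auto)
  also have "lincomb_seq n (\<lambda>i. v \<bullet>c f i) f {..<N} = S *\<^sub>v v" unfolding S_def
    by (rule frame_op_apply[where N=N and f=f, OF v fc, symmetric])
  also have "Si *\<^sub>v (S *\<^sub>v v) = (Si * S) *\<^sub>v v" using Sic Sc v by simp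
  also have "\<dots> = v" using SiS v by simp
  finally show ?thesis .
qed

lemma recon2: assumes v: "v \<in> carrier_vec n"
  shows "lincomb_seq n (\<lambda>i. v \<bullet>c g i) f {..<N} = v"
proof -
  have Siv: "Si *\<^sub>v v \<in> carrier_vec n" using Sic v by simp
  have e: "v \<bullet>c g i = (Si *\<^sub>v v) \<bullet>c f i" if i: "i < N" for i
    unfolding g_def using inner_adj[OF Sic v fc[OF i]] Sih by simp
  have "lincomb_seq n (\<lambda>i. v \<bullet>c g i) f {..<N} = lincomb_seq n (\<lambda>i. (Si *\<^sub>v v) \<bullet>c f i) f {..<N}"
    unfolding lincomb_seq_def using e by (auto intro!: eq_vecI sum.cong)
  also have "\<dots> = S *\<^sub>v (Si *\<^sub>v v)" unfolding S_def
    by (rule frame_op_apply[where N=N and f=f, OF Siv fc, symmetric])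
  also have "\<dots> = (S * Si) *\<^sub>v v" using Sic Sc v by simp
  also have "\<dots> = v" using SSi v by simp
  finally show ?thesis .
qed

lemma canon_dual: "is_dual K n N f g"
  unfolding is_dual_def
proof (intro conjI allI impI)
  show "is_frame K n N g"
    unfolding is_frame_def
  proof (intro conjI allI impI)
    fix i assume "i < N" thus "inH K n (g i)" by (rule gH)
  next
    show "spanK K n g {..<N} = {v. inH K n v}"
    proof
      show "spanK K n g {..<N} \<subseteq> {v. inH K n v}"
      proof
        fix x assume "x \<in> spanK K n g {..<N}"
        then obtain c where x: "x = lincomb_seq n c g {..<N}" and c: "\<forall>i\<in>{..<N}. c i \<in> K"
          unfolding spanK_def by auto
        show "x \<in> {v. inH K n v}" unfolding x inH_def
          using c gK K by (auto intro!: Kok_sum Kok_mult)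
      qed
    next
      show "{v. inH K n v} \<subseteq> spanK K n g {..<N}"
      proof
        fix v assume v: "v \<in> {v. inH K n v}"
        hence vc: "v \<in> carrier_vec n" unfolding inH_def by auto
        have "v = lincomb_seq n (\<lambda>i. v \<bullet>c f i) g {..<N}" using recon1[OF vc] by simp
        moreover have "\<forall>i\<in>{..<N}. v \<bullet>c f i \<in> K" using inner_K v fH by auto
        ultimately show "v \<in> spanK K n g {..<N}" unfolding spanK_def by blast
      qed
    qed
  qed
next
  fix v assume "inH K n v"
  hence vc: "v \<in> carrier_vec n" unfolding inH_def by auto
  show "v = lincomb_seq n (\<lambda>i. v \<bullet>c f i) g {..<N}" using recon1[OF vc] by simp
  show "v = lincomb_seq n (\<lambda>i. v \<bullet>c g i) f {..<N}" using recon2[OF vc] by simp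
qed

end


lemma unit_cinner: fixes w :: "complex vec" shows "w \<in> carrier_vec n \<Longrightarrow> k < n \<Longrightarrow> unit_vec n k \<bullet>c w = cnj (w $ k)"
  using cinner_conj_sym[of w n "unit_vec n k"] cinner_unit[of w n k] by simp

locale pctx = fctx +
  fixes U1 :: "nat set"
  assumes U1sub: "U1 \<subseteq> {..<N}"
    and disj: "spanK K n f U1 \<inter> spanK K n f ({..<N} - U1) = {0\<^sub>v n}"
begin

lemma unitH: "k < n \<Longrightarrow> inH K n (unit_vec n k)"
  unfolding inH_def using K Kok_0 Kok_1 by auto

lemma coeffs_ex: "\<exists>cf. \<forall>k<n. (\<forall>i\<in>{..<N}. cf k i \<in> K) \<and> unit_vec n k = lincomb_seq n (cf k) f {..<N}"
proof -
  have "\<forall>k<n. \<exists>c. (\<forall>i\<in>{..<N}. c i \<in> K) \<and> unit_vec n k = lincomb_seq n c f {..<N}"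
  proof (intro allI impI)
    fix k assume "k < n"
    hence "unit_vec n k \<in> spanK K n f {..<N}" using unitH fr unfolding is_frame_def by auto
    thus "\<exists>c. (\<forall>i\<in>{..<N}. c i \<in> K) \<and> unit_vec n k = lincomb_seq n c f {..<N}"
      unfolding spanK_def by auto
  qed
  thus ?thesis by metis
qed

definition "cf = (SOME cf. \<forall>k<n. (\<forall>i\<in>{..<N}. cf k i \<in> K) \<and> unit_vec n k = lincomb_seq n (cf k) f {..<N})"

lemma cf: "k < n \<Longrightarrow> (\<forall>i\<in>{..<N}. cf k i \<in> K) \<and> unit_vec n k = lincomb_seq n (cf k) f {..<N}"
  using someI_ex[OF coeffs_ex] unfolding cf_def by blast

lemma cfK: "k < n \<Longrightarrow> i < N \<Longrightarrow> cf k i \<in> K" using cf by auto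

lemma cf_entry: assumes k: "k < n" and r: "r < n"
  shows "(\<Sum>i<N. cf k i * f i $ r) = (if r = k then 1 else 0)"
proof -
  have "unit_vec n k $ r = lincomb_seq n (cf k) f {..<N} $ r" using cf[OF k] by simp
  thus ?thesis using k r by simp
qed

definition "Q = mat n n (\<lambda>(r,k). \<Sum>i\<in>U1. cf k i * f i $ r)"

lemma Qc: "Q \<in> carrier_mat n n" unfolding Q_def by simp

lemma QK: "r < n \<Longrightarrow> k < n \<Longrightarrow> Q $$ (r,k) \<in> K"
  unfolding Q_def using U1sub cfK fK K by (auto intro!: Kok_sum Kok_mult)

lemma fdim: "i < N \<Longrightarrow> dim_vec (f i) = n" using fc by auto

lemma U2fin: "finite ({..<N} - U1)" by simp
lemma U1fin: "finite U1" using U1sub finite_subset by blast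

lemma sum_split: "(\<Sum>i<N. h i) = (\<Sum>i\<in>U1. h i) + (\<Sum>i\<in>{..<N} - U1. h i)"
  using sum.subset_diff[OF U1sub, of h] by (simp add: add.commute)

lemma Q_f: assumes j: "j < N"
  shows "Q *\<^sub>v f j = (if j \<in> U1 then f j else 0\<^sub>v n)"
proof -
  define d where "d i = (\<Sum>k<n. f j $ k * cf k i)" for i
  define a where "a i = d i - (if i = j then 1 else 0)" for i
  have aK: "i < N \<Longrightarrow> a i \<in> K" for i
    unfolding a_def d_def using K cfK fK j by (auto intro!: Kok_diff Kok_sum Kok_mult Kok_0 Kok_1)
  have Qfj: "(Q *\<^sub>v f j) $ r = (\<Sum>i\<in>U1. d i * f i $ r)" if r: "r < n" for r
  proof -
    have "(Q *\<^sub>v f j) $ r = (\<Sum>k<n. Q $$ (r,k) * f j $ k)" by (rule mult_vec_index_sum[OF Qc fc[OF j] r])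
    also have "\<dots> = (\<Sum>k<n. (\<Sum>i\<in>U1. cf k i * f i $ r) * f j $ k)"
      by (rule sum.cong) (use r in \<open>auto simp: Q_def\<close>)
    also have "\<dots> = (\<Sum>k<n. \<Sum>i\<in>U1. cf k i * f i $ r * f j $ k)" by (simp add: sum_distrib_right)
    also have "\<dots> = (\<Sum>i\<in>U1. \<Sum>k<n. cf k i * f i $ r * f j $ k)" by (rule sum.swap)
    also have "\<dots> = (\<Sum>i\<in>U1. d i * f i $ r)" unfolding d_def by (simp add: sum_distrib_left sum_distrib_right mult_ac)
    finally show ?thesis .
  qed
  have fj: "f j $ r = (\<Sum>i<N. d i * f i $ r)" if r: "r < n" for r
  proof -
    have "(\<Sum>i<N. d i * f i $ r) = (\<Sum>i<N. \<Sum>k<n. f j $ k * cf k i * f i $ r)"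
      unfolding d_def by (simp add: sum_distrib_right)
    also have "\<dots> = (\<Sum>k<n. \<Sum>i<N. f j $ k * cf k i * f i $ r)" by (rule sum.swap)
    also have "\<dots> = (\<Sum>k<n. f j $ k * (if r = k then 1 else 0))"
      by (rule sum.cong[OF refl]) (simp add: cf_entry[OF _ r, symmetric] sum_distrib_left mult_ac)
    also have "\<dots> = (\<Sum>k<n. f j $ k * (if k = r then 1 else 0))" by (rule sum.cong) auto
    also have "\<dots> = f j $ r" by (rule sum_delta_mult[OF r])
    finally show ?thesis by simp
  qed
  define x where "x = lincomb_seq n a f U1"
  define y where "y = lincomb_seq n (\<lambda>i. - a i) f ({..<N} - U1)"
  have xy: "x = y"
  proof (rule eq_vecI)
    fix r assume "r < dim_vec y"
    hence r: "r < n" unfolding y_def by simp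
    have "(\<Sum>i<N. a i * f i $ r) = 0"
    proof -
      have "(\<Sum>i<N. a i * f i $ r) = (\<Sum>i<N. d i * f i $ r) - (\<Sum>i<N. (if i = j then 1 else 0) * f i $ r)"
        unfolding a_def by (simp add: left_diff_distrib sum_subtractf)
      also have "(\<Sum>i<N. (if i = j then 1 else 0) * f i $ r) = f j $ r"
      proof -
        have "(\<Sum>i<N. (if i = j then 1 else 0) * f i $ r) = (\<Sum>i<N. if i = j then f i $ r else 0)"
          by (rule sum.cong) auto
        also have "\<dots> = f j $ r" using j by (simp add: sum.delta[OF finite_lessThan])
        finally show ?thesis .
      qed
      finally show ?thesis using fj[OF r] by simp
    qed
    hence "(\<Sum>i\<in>U1. a i * f i $ r) + (\<Sum>i\<in>{..<N} - U1. a i * f i $ r) = 0"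
      using sum_split[of "\<lambda>i. a i * f i $ r"] by simp
    hence "(\<Sum>i\<in>U1. a i * f i $ r) = (\<Sum>i\<in>{..<N} - U1. - a i * f i $ r)"
      by (simp add: sum_negf eq_neg_iff_add_eq_0)
    thus "x $ r = y $ r" unfolding x_def y_def using r by simp
  qed (simp add: x_def y_def)
  have "x \<in> spanK K n f U1" unfolding x_def spanK_def using aK U1sub by auto
  moreover have "y \<in> spanK K n f ({..<N} - U1)" unfolding y_def spanK_def using aK K Kok_uminus by auto
  ultimately have x0: "x = 0\<^sub>v n" using disj xy by auto
  show ?thesis
  proof (rule eq_vecI)
    fix r assume "r < dim_vec (if j \<in> U1 then f j else 0\<^sub>v n)"
    hence r: "r < n" using fc[OF j] by (auto split: if_splits)
    have "x $ r = 0" using x0 r by simp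
    hence "(\<Sum>i\<in>U1. a i * f i $ r) = 0" unfolding x_def using r by simp
    hence "(\<Sum>i\<in>U1. d i * f i $ r) = (\<Sum>i\<in>U1. (if i = j then 1 else 0) * f i $ r)"
      unfolding a_def by (simp add: left_diff_distrib sum_subtractf)
    also have "(\<Sum>i\<in>U1. (if i = j then 1 else 0) * f i $ r) = (if j \<in> U1 then f j $ r else 0)"
    proof -
      have "(\<Sum>i\<in>U1. (if i = j then 1 else 0) * f i $ r) = (\<Sum>i\<in>U1. if i = j then f i $ r else 0)"
        by (rule sum.cong) auto
      also have "\<dots> = (if j \<in> U1 then f j $ r else 0)" using U1fin by (simp add: sum.delta)
      finally show ?thesis .
    qed
    finally show "(Q *\<^sub>v f j) $ r = (if j \<in> U1 then f j else 0\<^sub>v n) $ r"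
      using Qfj[OF r] r by simp
  qed (use Qc fc[OF j] in simp)
qed

lemma dualD: assumes G: "is_dual K n N f G" and v: "inH K n v"
  shows "lincomb_seq n (\<lambda>i. v \<bullet>c f i) G {..<N} = v"
  using G v unfolding is_dual_def by auto

lemma dual_carrier: assumes G: "is_dual K n N f G" and i: "i < N" shows "G i \<in> carrier_vec n"
  using G i unfolding is_dual_def is_frame_def inH_def by auto

lemma dualK: assumes G: "is_dual K n N f G" and i: "i < N" shows "inH K n (G i)"
  using G i unfolding is_dual_def is_frame_def by auto

lemma T1: assumes G: "is_dual K n N f G"
  shows "(\<Sum>i\<in>U1. G i \<bullet>c f i) = (\<Sum>r<n. cnj (Q $$ (r,r)))"
proof -
  have Gc: "\<And>i. i < N \<Longrightarrow> G i \<in> carrier_vec n" using dual_carrier[OF G] .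
  have rec: "(\<Sum>i<N. cnj (f i $ k) * G i $ r) = (if k = r then 1 else 0)" if k: "k < n" and r: "r < n" for k r
  proof -
    have "lincomb_seq n (\<lambda>i. unit_vec n k \<bullet>c f i) G {..<N} $ r = unit_vec n k $ r"
      using dualD[OF G unitH[OF k]] by simp
    moreover have "lincomb_seq n (\<lambda>i. unit_vec n k \<bullet>c f i) G {..<N} $ r = (\<Sum>i<N. cnj (f i $ k) * G i $ r)"
    proof -
      have cj: "\<And>i. i < N \<Longrightarrow> conjugate (f i) $ k = cnj (f i $ k)" using fdim k by simp
      show ?thesis using r k fc cj by (auto simp: unit_cinner intro!: sum.cong)
    qed
    ultimately show ?thesis using k r by auto
  qed
  have "(\<Sum>i\<in>U1. G i \<bullet>c f i) = (\<Sum>i<N. G i \<bullet>c (Q *\<^sub>v f i))"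
  proof -
    have "(\<Sum>i<N. G i \<bullet>c (Q *\<^sub>v f i)) = (\<Sum>i<N. if i \<in> U1 then G i \<bullet>c f i else 0)"
      by (rule sum.cong[OF refl]) (use Q_f Gc in \<open>auto simp: cinner_sum[of _ n]\<close>)
    also have "\<dots> = (\<Sum>i\<in>U1. G i \<bullet>c f i)"
      using U1sub by (simp add: sum.If_cases Int_absorb1)
    finally show ?thesis by simp
  qed
  also have "\<dots> = (\<Sum>i<N. \<Sum>r<n. G i $ r * (\<Sum>k<n. cnj (Q $$ (r,k)) * cnj (f i $ k)))"
  proof (rule sum.cong[OF refl])
    fix i assume i: "i \<in> {..<N}"
    have Qf: "Q *\<^sub>v f i \<in> carrier_vec n" using Qc fc i by simp
    show "G i \<bullet>c (Q *\<^sub>v f i) = (\<Sum>r<n. G i $ r * (\<Sum>k<n. cnj (Q $$ (r,k)) * cnj (f i $ k)))"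
      using Qc fc i by (simp add: cinner_sum[OF Qf])
  qed
  also have "\<dots> = (\<Sum>i<N. \<Sum>r<n. \<Sum>k<n. cnj (Q $$ (r,k)) * (cnj (f i $ k) * G i $ r))"
    by (simp add: sum_distrib_left mult_ac)
  also have "\<dots> = (\<Sum>r<n. \<Sum>i<N. \<Sum>k<n. cnj (Q $$ (r,k)) * (cnj (f i $ k) * G i $ r))" by (rule sum.swap)
  also have "\<dots> = (\<Sum>r<n. \<Sum>k<n. \<Sum>i<N. cnj (Q $$ (r,k)) * (cnj (f i $ k) * G i $ r))"
    by (rule sum.cong[OF refl]) (rule sum.swap)
  also have "\<dots> = (\<Sum>r<n. \<Sum>k<n. cnj (Q $$ (r,k)) * (if k = r then 1 else 0))"
    by (intro sum.cong[OF refl]) (simp add: sum_distrib_left[symmetric] rec)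
  also have "\<dots> = (\<Sum>r<n. cnj (Q $$ (r,r)))"
    by (rule sum.cong[OF refl]) (rule sum_delta_mult, simp)
  finally show ?thesis .
qed

lemma T2: assumes G: "is_dual K n N f G" and j: "j \<in> U1"
  shows "(\<Sum>i\<in>U1. (G j \<bullet>c f i) * (G i \<bullet>c f j)) = G j \<bullet>c f j"
proof -
  have jN: "j < N" using j U1sub by auto
  have Gc: "\<And>i. i < N \<Longrightarrow> G i \<in> carrier_vec n" using dual_carrier[OF G] .
  define w where "w = adj Q *\<^sub>v G j"
  have wc: "w \<in> carrier_vec n" unfolding w_def using Qc Gc[OF jN] by simp
  have wH: "inH K n w"
  proof -
    have "w $ r \<in> K" if r: "r < n" for r
    proof -
      have "w $ r = (\<Sum>l<n. cnj (Q $$ (l,r)) * G j $ l)" unfolding w_def using Qc Gc[OF jN] r by simp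
      also have "\<dots> \<in> K" using dualK[OF G jN] QK r K unfolding inH_def by (auto intro!: Kok_sum Kok_mult Kok_cnj)
      finally show ?thesis .
    qed
    thus ?thesis unfolding inH_def using wc by auto
  qed
  have wi: "G j \<bullet>c (Q *\<^sub>v f i) = w \<bullet>c f i" if i: "i < N" for i
    unfolding w_def using inner_adj[OF adj_carrier[OF Qc] Gc[OF jN] fc[OF i]] by simp
  have "(\<Sum>i\<in>U1. (G j \<bullet>c f i) * (G i \<bullet>c f j)) = (\<Sum>i<N. (G j \<bullet>c (Q *\<^sub>v f i)) * (G i \<bullet>c f j))"
  proof -
    have "(\<Sum>i<N. (G j \<bullet>c (Q *\<^sub>v f i)) * (G i \<bullet>c f j)) = (\<Sum>i<N. if i \<in> U1 then (G j \<bullet>c f i) * (G i \<bullet>c f j) else 0)"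
      by (rule sum.cong[OF refl]) (use Q_f Gc jN in \<open>auto simp: cinner_sum[of _ n]\<close>)
    also have "\<dots> = (\<Sum>i\<in>U1. (G j \<bullet>c f i) * (G i \<bullet>c f j))"
      using U1sub by (simp add: sum.If_cases Int_absorb1)
    finally show ?thesis by simp
  qed
  also have "\<dots> = (\<Sum>i<N. (w \<bullet>c f i) * (G i \<bullet>c f j))" using wi by simp
  also have "\<dots> = lincomb_seq n (\<lambda>i. w \<bullet>c f i) G {..<N} \<bullet>c f j"
    by (rule cinner_lincomb_left[OF fc[OF jN], symmetric])
  also have "\<dots> = w \<bullet>c f j" using dualD[OF G wH] by simp
  also have "\<dots> = G j \<bullet>c (Q *\<^sub>v f j)" using wi[OF jN] by simp
  also have "\<dots> = G j \<bullet>c f j" using Q_f[OF jN] j by simp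
  finally show ?thesis .
qed

end


lemma quad_bound: fixes l :: complex and A B c k :: real
  assumes A: "0 \<le> A" "A \<le> c" and B: "0 \<le> B" "B \<le> c" and k: "0 \<le> k"
    and eq: "(l - complex_of_real A) * (l - complex_of_real B) = complex_of_real k"
  shows "cmod l \<le> c + sqrt k"
proof -
  define m where "m = (A + B) / 2"
  define t where "t = (A - B) / 2"
  define s where "s = sqrt (t^2 + k)"
  have s0: "0 \<le> s" unfolding s_def using k by simp
  have ss: "s * s = t^2 + k" unfolding s_def using k by (simp add: power2_eq_square[symmetric])
  have "(l - complex_of_real m - complex_of_real s) * (l - complex_of_real m + complex_of_real s)
      = (l - complex_of_real A) * (l - complex_of_real B) + complex_of_real (t^2 + k - s * s) - complex_of_real k"
    unfolding m_def t_def by (simp add: algebra_simps power2_eq_square of_real_mult[symmetric] del: of_real_mult) (simp add: field_simps)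
  also have "\<dots> = 0" using eq ss by simp
  finally have "l - complex_of_real m - complex_of_real s = 0 \<or> l - complex_of_real m + complex_of_real s = 0"
    by (simp only: mult_eq_0_iff)
  hence "l = complex_of_real (m + s) \<or> l = complex_of_real (m - s)"
    by (auto simp: algebra_simps)
  hence "cmod l = \<bar>m + s\<bar> \<or> cmod l = \<bar>m - s\<bar>" by (metis norm_of_real)
  moreover have "s \<le> \<bar>t\<bar> + sqrt k"
  proof -
    have "s \<le> sqrt (t^2) + sqrt k" unfolding s_def by (rule sqrt_add_le_add_sqrt) (use k in auto)
    thus ?thesis by simp
  qed
  moreover have "m + \<bar>t\<bar> \<le> c" unfolding m_def t_def using A B by (auto simp: abs_if field_simps)
  moreover have "0 \<le> m" unfolding m_def using A B by simp
  moreover have "sqrt k \<ge> 0" using k by simp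
  ultimately show ?thesis using s0 by auto
qed

lemma csqrt_re_bound: fixes y :: complex and k :: real
  assumes k: "0 \<le> k" and y: "k \<le> Re y"
  shows "sqrt k \<le> Re (csqrt y)"
proof -
  define w where "w = csqrt y"
  have w0: "0 \<le> Re w" unfolding w_def by (rule Re_csqrt)
  have "w^2 = y" unfolding w_def by simp
  hence "Re y = (Re w)^2 - (Im w)^2" by (auto simp: power2_eq_square)
  hence "k \<le> (Re w)^2" using y by (smt (verit) zero_le_power2)
  hence "sqrt k \<le> sqrt ((Re w)^2)" by (rule real_sqrt_le_mono)
  thus ?thesis using w0 unfolding w_def by simp
qed


locale qctx = pctx +
  fixes q :: "nat \<Rightarrow> real"
  assumes qpos: "\<And>i. i < N \<Longrightarrow> q i > 0" and npos: "n > 0"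
begin

definition "Dm \<Lambda> = mat N N (\<lambda>(i,j). if i = j \<and> i \<in> \<Lambda> then complex_of_real (q i) else 0)"
definition "Mop G \<Lambda> = synthesis_op n N G * Dm \<Lambda> * analysis_op n N f"
definition "rad G \<Lambda> = spectral_radius (Mop G \<Lambda>)"

lemma Mop_dim[simp]: "dim_row (Mop G \<Lambda>) = n" "dim_col (Mop G \<Lambda>) = n"
  unfolding Mop_def Dm_def synthesis_op_def analysis_op_def by simp_all

lemma Mop_c: "Mop G \<Lambda> \<in> carrier_mat n n"
  unfolding carrier_mat_def by simp

lemma Mop_apply: assumes L: "\<Lambda> \<subseteq> {..<N}" and v: "v \<in> carrier_vec n"
  shows "Mop G \<Lambda> *\<^sub>v v = lincomb_seq n (\<lambda>i. complex_of_real (q i) * (v \<bullet>c f i)) G \<Lambda>"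
proof -
  define Sy where "Sy = synthesis_op n N G"
  define An where "An = analysis_op n N f"
  have Sy: "Sy \<in> carrier_mat n N" unfolding Sy_def synthesis_op_def by simp
  have An: "An \<in> carrier_mat N n" unfolding An_def analysis_op_def by simp
  have D: "Dm \<Lambda> \<in> carrier_mat N N" unfolding Dm_def by simp
  have Av: "An *\<^sub>v v = vec N (\<lambda>j. v \<bullet>c f j)"
  proof (rule eq_vecI)
    fix j assume "j < dim_vec (vec N (\<lambda>j. v \<bullet>c f j))"
    hence j: "j < N" by simp
    have "(An *\<^sub>v v) $ j = (\<Sum>l<n. cnj (f j $ l) * v $ l)"
      by (subst mult_vec_index_sum[OF An v j]) (use j in \<open>auto simp: An_def analysis_op_def intro!: sum.cong\<close>)
    also have "\<dots> = v \<bullet>c f j" using fc[OF j] by (simp add: cinner_sum[of _ n] mult.commute)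
    finally show "(An *\<^sub>v v) $ j = vec N (\<lambda>j. v \<bullet>c f j) $ j" using j by simp
  qed (use An in simp)
  have DAv: "Dm \<Lambda> *\<^sub>v (An *\<^sub>v v) = vec N (\<lambda>j. if j \<in> \<Lambda> then complex_of_real (q j) * (v \<bullet>c f j) else 0)"
  proof (rule eq_vecI)
    fix j assume "j < dim_vec (vec N (\<lambda>j. if j \<in> \<Lambda> then complex_of_real (q j) * (v \<bullet>c f j) else 0))"
    hence j: "j < N" by simp
    have "(Dm \<Lambda> *\<^sub>v (An *\<^sub>v v)) $ j = (\<Sum>i<N. Dm \<Lambda> $$ (j,i) * (An *\<^sub>v v) $ i)"
      by (rule mult_vec_index_sum[OF D _ j]) (use An v in simp)
    also have "\<dots> = (\<Sum>i<N. if i = j then (if j \<in> \<Lambda> then complex_of_real (q j) * (v \<bullet>c f j) else 0) else 0)"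
      by (rule sum.cong[OF refl]) (use j in \<open>auto simp: Dm_def Av\<close>)
    also have "\<dots> = (if j \<in> \<Lambda> then complex_of_real (q j) * (v \<bullet>c f j) else 0)"
      using j by (simp add: sum.delta[OF finite_lessThan])
    finally show "(Dm \<Lambda> *\<^sub>v (An *\<^sub>v v)) $ j = vec N (\<lambda>j. if j \<in> \<Lambda> then complex_of_real (q j) * (v \<bullet>c f j) else 0) $ j"
      using j by simp
  qed (use D in simp)
  have "Mop G \<Lambda> *\<^sub>v v = (Sy * Dm \<Lambda>) *\<^sub>v (An *\<^sub>v v)"
    unfolding Mop_def Sy_def[symmetric] An_def[symmetric]
    by (rule assoc_mult_mat_vec[of _ n N _ n]) (use Sy D An v in auto)
  also have "\<dots> = Sy *\<^sub>v (Dm \<Lambda> *\<^sub>v (An *\<^sub>v v))"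
    by (rule assoc_mult_mat_vec[of _ n N _ N]) (use Sy D An v in auto)
  also have "\<dots> = lincomb_seq n (\<lambda>i. complex_of_real (q i) * (v \<bullet>c f i)) G \<Lambda>"
  proof (rule eq_vecI)
    fix k assume "k < dim_vec (lincomb_seq n (\<lambda>i. complex_of_real (q i) * (v \<bullet>c f i)) G \<Lambda>)"
    hence k: "k < n" by simp
    have "(Sy *\<^sub>v (Dm \<Lambda> *\<^sub>v (An *\<^sub>v v))) $ k = (\<Sum>j<N. Sy $$ (k,j) * (Dm \<Lambda> *\<^sub>v (An *\<^sub>v v)) $ j)"
      by (rule mult_vec_index_sum[OF Sy _ k]) (use D An v in simp)
    also have "\<dots> = (\<Sum>j<N. if j \<in> \<Lambda> then complex_of_real (q j) * (v \<bullet>c f j) * G j $ k else 0)"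
      by (rule sum.cong[OF refl]) (use k in \<open>auto simp: DAv Sy_def synthesis_op_def\<close>)
    also have "\<dots> = (\<Sum>j\<in>\<Lambda>. complex_of_real (q j) * (v \<bullet>c f j) * G j $ k)"
      using L by (simp add: sum.If_cases Int_absorb1)
    finally show "(Sy *\<^sub>v (Dm \<Lambda> *\<^sub>v (An *\<^sub>v v))) $ k = lincomb_seq n (\<lambda>i. complex_of_real (q i) * (v \<bullet>c f i)) G \<Lambda> $ k"
      using k by simp
  qed (use Sy in simp)
  finally show ?thesis .
qed

lemma rad_ge: assumes v: "v \<in> carrier_vec n" and nz: "v \<noteq> 0\<^sub>v n" and ev: "Mop G \<Lambda> *\<^sub>v v = l \<cdot>\<^sub>v v"
  shows "cmod l \<le> rad G \<Lambda>"
proof -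
  have "eigenvector (Mop G \<Lambda>) v l" unfolding eigenvector_def using Mop_c v nz ev by auto
  hence "l \<in> spectrum (Mop G \<Lambda>)" unfolding spectrum_def eigenvalue_def by auto
  thus ?thesis unfolding rad_def using spectral_radius_mem_max(2)[OF Mop_c npos] by auto
qed

lemma rad_le: assumes b: "\<And>l v. v \<in> carrier_vec n \<Longrightarrow> v \<noteq> 0\<^sub>v n \<Longrightarrow> Mop G \<Lambda> *\<^sub>v v = l \<cdot>\<^sub>v v \<Longrightarrow> cmod l \<le> B"
  shows "rad G \<Lambda> \<le> B"
proof -
  from spectral_radius_mem_max(1)[OF Mop_c npos] obtain l where
    l: "l \<in> spectrum (Mop G \<Lambda>)" and r: "rad G \<Lambda> = cmod l" unfolding rad_def by auto
  from l obtain v where "eigenvector (Mop G \<Lambda>) v l" unfolding spectrum_def eigenvalue_def by auto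
  hence "v \<in> carrier_vec n" "v \<noteq> 0\<^sub>v n" "Mop G \<Lambda> *\<^sub>v v = l \<cdot>\<^sub>v v" unfolding eigenvector_def using Mop_c by auto
  thus ?thesis using b r by simp
qed

lemma rad_nonneg: "0 \<le> rad G \<Lambda>"
proof -
  from spectral_radius_mem_max(1)[OF Mop_c npos] obtain l where "rad G \<Lambda> = cmod l" unfolding rad_def by auto
  thus ?thesis by simp
qed


lemma lincomb_single: "G i \<in> carrier_vec n \<Longrightarrow> lincomb_seq n c G {i} = c i \<cdot>\<^sub>v G i"
  by (intro eq_vecI) auto

lemma lincomb_pair: "i \<noteq> j \<Longrightarrow> G i \<in> carrier_vec n \<Longrightarrow> G j \<in> carrier_vec n \<Longrightarrow>
  lincomb_seq n c G {i,j} = c i \<cdot>\<^sub>v G i + c j \<cdot>\<^sub>v G j"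
  by (intro eq_vecI) auto

lemma cinner_two: fixes a b w :: "complex vec"
  assumes "a \<in> carrier_vec n" "b \<in> carrier_vec n" "w \<in> carrier_vec n"
  shows "(x \<cdot>\<^sub>v a + y \<cdot>\<^sub>v b) \<bullet>c w = x * (a \<bullet>c w) + y * (b \<bullet>c w)"
  using assms by (simp add: cinner_sum[of w n] sum.distrib sum_distrib_left algebra_simps)

lemma cinner_smult1: fixes a w :: "complex vec"
  assumes "a \<in> carrier_vec n" "w \<in> carrier_vec n"
  shows "(x \<cdot>\<^sub>v a) \<bullet>c w = x * (a \<bullet>c w)"
  using assms by (rule cinner_smult_left)

lemma rad_single: assumes i: "i < N" and Gi: "G i \<in> carrier_vec n"
  shows "rad G {i} = q i * cmod (G i \<bullet>c f i)"
proof (rule antisym)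
  have L: "{i} \<subseteq> {..<N}" using i by simp
  have fi: "f i \<in> carrier_vec n" using fc[OF i] .
  show "rad G {i} \<le> q i * cmod (G i \<bullet>c f i)"
  proof (rule rad_le)
    fix l v assume v: "v \<in> carrier_vec n" and nz: "v \<noteq> 0\<^sub>v n" and ev: "Mop G {i} *\<^sub>v v = l \<cdot>\<^sub>v v"
    have Mv: "Mop G {i} *\<^sub>v v = (complex_of_real (q i) * (v \<bullet>c f i)) \<cdot>\<^sub>v G i"
      unfolding Mop_apply[OF L v] by (rule lincomb_single[where G=G and i=i, OF Gi])
    show "cmod l \<le> q i * cmod (G i \<bullet>c f i)"
    proof (cases "l = 0")
      case True then show ?thesis using qpos[OF i] by simp
    next
      case False
      have "v \<bullet>c f i \<noteq> 0"
      proof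
        assume "v \<bullet>c f i = 0"
        hence "l \<cdot>\<^sub>v v = 0 \<cdot>\<^sub>v G i" using ev Mv by simp
        also have "\<dots> = 0\<^sub>v n" using Gi by (intro eq_vecI) auto
        finally have "l \<cdot>\<^sub>v v = 0\<^sub>v n" .
        hence lv: "l \<cdot>\<^sub>v v = 0\<^sub>v n" .
        have "v = (1 / l) \<cdot>\<^sub>v (l \<cdot>\<^sub>v v)" using False by (simp add: smult_smult_assoc)
        also have "\<dots> = 0\<^sub>v n" unfolding lv by (intro eq_vecI) auto
        finally have "v = 0\<^sub>v n" .
        thus False using nz by simp
      qed
      have "l * (v \<bullet>c f i) = (l \<cdot>\<^sub>v v) \<bullet>c f i" by (rule cinner_smult_left[OF v fi, symmetric])
      also have "\<dots> = (complex_of_real (q i) * (v \<bullet>c f i)) * (G i \<bullet>c f i)" unfolding ev[symmetric] Mv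
        by (rule cinner_smult_left[OF Gi fi])
      finally have "l = complex_of_real (q i) * (G i \<bullet>c f i)" using \<open>v \<bullet>c f i \<noteq> 0\<close> by (simp add: mult_ac)
      thus ?thesis using qpos[OF i] by (simp add: norm_mult)
    qed
  qed
  show "q i * cmod (G i \<bullet>c f i) \<le> rad G {i}"
  proof (cases "G i \<bullet>c f i = 0")
    case True then show ?thesis using rad_nonneg by simp
  next
    case False
    have nz: "G i \<noteq> 0\<^sub>v n" using False by (auto simp: cinner_sum[OF fi])
    have "Mop G {i} *\<^sub>v G i = (complex_of_real (q i) * (G i \<bullet>c f i)) \<cdot>\<^sub>v G i"
      unfolding Mop_apply[OF L Gi] by (rule lincomb_single[where G=G and i=i, OF Gi])
    from rad_ge[OF Gi nz this] show ?thesis using qpos[OF i] by (simp add: norm_mult)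
  qed
qed


lemma smult_zero_cancel: fixes v :: "complex vec"
  assumes v: "v \<in> carrier_vec n" and l: "l \<noteq> 0" and z: "l \<cdot>\<^sub>v v = 0\<^sub>v n" shows "v = 0\<^sub>v n"
proof -
  have "v = (1 / l) \<cdot>\<^sub>v (l \<cdot>\<^sub>v v)" using l by (simp add: smult_smult_assoc)
  also have "\<dots> = 0\<^sub>v n" unfolding z by (intro eq_vecI) auto
  finally show ?thesis .
qed

lemma pair_upper: assumes i: "i < N" and j: "j < N" and ij: "i \<noteq> j"
  and Gi: "G i \<in> carrier_vec n" and Gj: "G j \<in> carrier_vec n"
  and ai: "G i \<bullet>c f i = complex_of_real a" and aj: "G j \<bullet>c f j = complex_of_real b"
  and A: "0 \<le> q i * a" "q i * a \<le> c" and B: "0 \<le> q j * b" "q j * b \<le> c"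
  and kap: "complex_of_real (q i * q j) * (G j \<bullet>c f i) * (G i \<bullet>c f j) = complex_of_real k" and k: "0 \<le> k"
  shows "rad G {i,j} \<le> c + sqrt k"
proof (rule rad_le)
  have L: "{i,j} \<subseteq> {..<N}" using i j by simp
  have fi: "f i \<in> carrier_vec n" using fc[OF i] .
  have fj: "f j \<in> carrier_vec n" using fc[OF j] .
  fix l v assume v: "v \<in> carrier_vec n" and nz: "v \<noteq> 0\<^sub>v n" and ev: "Mop G {i,j} *\<^sub>v v = l \<cdot>\<^sub>v v"
  define \<alpha> where "\<alpha> = v \<bullet>c f i"
  define \<beta> where "\<beta> = v \<bullet>c f j"
  define b1 where "b1 = G j \<bullet>c f i"
  define b2 where "b2 = G i \<bullet>c f j"
  have Mv: "Mop G {i,j} *\<^sub>v v = (complex_of_real (q i) * \<alpha>) \<cdot>\<^sub>v G i + (complex_of_real (q j) * \<beta>) \<cdot>\<^sub>v G j"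
    unfolding Mop_apply[OF L v] \<alpha>_def \<beta>_def by (rule lincomb_pair[OF ij Gi Gj])
  have e1: "l * \<alpha> = complex_of_real (q i) * \<alpha> * complex_of_real a + complex_of_real (q j) * \<beta> * b1"
  proof -
    have "l * \<alpha> = (l \<cdot>\<^sub>v v) \<bullet>c f i" unfolding \<alpha>_def by (rule cinner_smult_left[OF v fi, symmetric])
    also have "\<dots> = complex_of_real (q i) * \<alpha> * (G i \<bullet>c f i) + complex_of_real (q j) * \<beta> * (G j \<bullet>c f i)"
      unfolding ev[symmetric] Mv by (rule cinner_two[OF Gi Gj fi])
    finally show ?thesis unfolding ai b1_def .
  qed
  have e2: "l * \<beta> = complex_of_real (q i) * \<alpha> * b2 + complex_of_real (q j) * \<beta> * complex_of_real b"
  proof -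
    have "l * \<beta> = (l \<cdot>\<^sub>v v) \<bullet>c f j" unfolding \<beta>_def by (rule cinner_smult_left[OF v fj, symmetric])
    also have "\<dots> = complex_of_real (q i) * \<alpha> * (G i \<bullet>c f j) + complex_of_real (q j) * \<beta> * (G j \<bullet>c f j)"
      unfolding ev[symmetric] Mv by (rule cinner_two[OF Gi Gj fj])
    finally show ?thesis unfolding aj b2_def .
  qed
  have c0: "0 \<le> c" using A by simp
  show "cmod l \<le> c + sqrt k"
  proof (cases "l = 0")
    case True then show ?thesis using c0 k by simp
  next
    case False
    show ?thesis
    proof (cases "\<alpha> = 0")
      case True
      have "\<beta> \<noteq> 0"
      proof
        assume "\<beta> = 0"
        hence "l \<cdot>\<^sub>v v = 0 \<cdot>\<^sub>v G i + 0 \<cdot>\<^sub>v G j" using ev Mv True by simp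
        also have "\<dots> = 0\<^sub>v n" using Gi Gj by (intro eq_vecI) auto
        finally show False using smult_zero_cancel[OF v False] nz by simp
      qed
      hence "l = complex_of_real (q j * b)" using e2 True by simp
      hence "cmod l = \<bar>q j * b\<bar>" by (simp only: norm_of_real)
      hence "cmod l = q j * b" using B by simp
      moreover have "0 \<le> sqrt k" using k by simp
      ultimately show ?thesis using B by linarith
    next
      case aN: False
      show ?thesis
      proof (cases "\<beta> = 0")
        case True
        hence "l = complex_of_real (q i * a)" using e1 aN by simp
        hence "cmod l = \<bar>q i * a\<bar>" by (simp only: norm_of_real)
        hence "cmod l = q i * a" using A by simp
        moreover have "0 \<le> sqrt k" using k by simp
        ultimately show ?thesis using A by linarith
      next
        case bN: False
        have e1': "(l - complex_of_real (q i * a)) * \<alpha> = complex_of_real (q j) * \<beta> * b1"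
          using e1 by (simp add: algebra_simps)
        have e2': "(l - complex_of_real (q j * b)) * \<beta> = complex_of_real (q i) * \<alpha> * b2"
          using e2 by (simp add: algebra_simps)
        have "(l - complex_of_real (q i * a)) * (l - complex_of_real (q j * b)) * (\<alpha> * \<beta>)
            = ((l - complex_of_real (q i * a)) * \<alpha>) * ((l - complex_of_real (q j * b)) * \<beta>)" by (simp add: mult_ac)
        also have "\<dots> = (complex_of_real (q i * q j) * b1 * b2) * (\<alpha> * \<beta>)" unfolding e1' e2' by (simp add: mult_ac)
        also have "\<dots> = complex_of_real k * (\<alpha> * \<beta>)" using kap unfolding b1_def b2_def by simp
        finally have "(l - complex_of_real (q i * a)) * (l - complex_of_real (q j * b)) = complex_of_real k"
          using aN bN by simp
        thus ?thesis by (rule quad_bound[OF A B k])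
      qed
    qed
  qed
qed

lemma pair_lower: assumes i: "i < N" and j: "j < N" and ij: "i \<noteq> j"
  and Gi: "G i \<in> carrier_vec n" and Gj: "G j \<in> carrier_vec n"
  and ai: "G i \<bullet>c f i = complex_of_real (c / q i)" and aj: "G j \<bullet>c f j = complex_of_real (c / q j)"
  and k: "0 \<le> k" and ky: "k \<le> Re (complex_of_real (q i * q j) * (G j \<bullet>c f i) * (G i \<bullet>c f j))"
  shows "c + sqrt k \<le> rad G {i,j}"
proof -
  have L: "{i,j} \<subseteq> {..<N}" using i j by simp
  have fi: "f i \<in> carrier_vec n" using fc[OF i] .
  have fj: "f j \<in> carrier_vec n" using fc[OF j] .
  define b1 where "b1 = complex_of_real (q i) * (G j \<bullet>c f i)"
  define b2 where "b2 = complex_of_real (q j) * (G i \<bullet>c f j)"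
  define y where "y = b1 * b2"
  have y: "y = complex_of_real (q i * q j) * (G j \<bullet>c f i) * (G i \<bullet>c f j)"
    unfolding y_def b1_def b2_def by (simp add: mult_ac)
  define w where "w = csqrt y"
  have ww: "w * w = y" unfolding w_def using power2_csqrt[of y] by (simp add: power2_eq_square)
  have wre: "sqrt k \<le> Re w" unfolding w_def by (rule csqrt_re_bound[OF k]) (use ky y in simp)
  define l where "l = complex_of_real c + w"
  have rel: "c + sqrt k \<le> Re l" unfolding l_def using wre by simp
  show ?thesis
  proof (cases "l = 0")
    case True
    thus ?thesis using rel rad_nonneg[of G "{i,j}"] by simp
  next
    case lN: False
    define a where "a = (if b1 = 0 then 0 else b1)"
    define b where "b = (if b1 = 0 then 1 else w)"
    have eqa: "a * complex_of_real c + b * b1 = l * a"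
      unfolding a_def b_def l_def by (simp add: algebra_simps)
    have eqb: "a * b2 + b * complex_of_real c = l * b"
    proof (cases "b1 = 0")
      case True
      hence "y = 0" unfolding y_def by simp
      hence "w = 0" unfolding w_def by simp
      thus ?thesis unfolding a_def b_def l_def using True by simp
    next
      case False
      thus ?thesis unfolding a_def b_def l_def using ww unfolding y_def by (simp add: algebra_simps)
    qed
    have abN: "a \<noteq> 0 \<or> b \<noteq> 0" unfolding a_def b_def by auto
    define v where "v = a \<cdot>\<^sub>v G i + b \<cdot>\<^sub>v G j"
    have v: "v \<in> carrier_vec n" unfolding v_def using Gi Gj by simp
    have qa: "complex_of_real (q i) * (v \<bullet>c f i) = l * a"
    proof -
      have "v \<bullet>c f i = a * complex_of_real (c / q i) + b * (G j \<bullet>c f i)"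
        unfolding v_def ai[symmetric] by (rule cinner_two[OF Gi Gj fi])
      hence "complex_of_real (q i) * (v \<bullet>c f i) = a * complex_of_real c + b * b1"
        using qpos[OF i] unfolding b1_def by (simp add: algebra_simps of_real_divide)
      thus ?thesis using eqa by simp
    qed
    have qb: "complex_of_real (q j) * (v \<bullet>c f j) = l * b"
    proof -
      have "v \<bullet>c f j = a * (G i \<bullet>c f j) + b * complex_of_real (c / q j)"
        unfolding v_def aj[symmetric] by (rule cinner_two[OF Gi Gj fj])
      hence "complex_of_real (q j) * (v \<bullet>c f j) = a * b2 + b * complex_of_real c"
        using qpos[OF j] unfolding b2_def by (simp add: algebra_simps of_real_divide)
      thus ?thesis using eqb by simp
    qed
    have Mv: "Mop G {i,j} *\<^sub>v v = (l * a) \<cdot>\<^sub>v G i + (l * b) \<cdot>\<^sub>v G j"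
      unfolding Mop_apply[OF L v] lincomb_pair[OF ij Gi Gj] qa qb ..
    also have "\<dots> = l \<cdot>\<^sub>v v" unfolding v_def using Gi Gj by (intro eq_vecI) (auto simp: algebra_simps)
    finally have ev: "Mop G {i,j} *\<^sub>v v = l \<cdot>\<^sub>v v" .
    have vN: "v \<noteq> 0\<^sub>v n"
    proof
      assume v0: "v = 0\<^sub>v n"
      have "v \<bullet>c f i = 0" "v \<bullet>c f j = 0" using v0 by (auto simp: cinner_sum[OF fi] cinner_sum[OF fj])
      hence "l * a = 0" "l * b = 0" using qa qb by auto
      thus False using lN abN by simp
    qed
    have "cmod l \<le> rad G {i,j}" by (rule rad_ge[OF v vN ev])
    moreover have "Re l \<le> cmod l" by (rule complex_Re_le_cmod)
    ultimately show ?thesis using rel by simp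
  qed
qed

end


locale mctx = qctx +
  fixes p :: "nat \<Rightarrow> real" and c \<kappa> :: real
  assumes q_eq: "q = weight_num n N p"
    and c_def: "c = Max {q i * (vnorm (R *\<^sub>v f i))^2 | i. i < N}"
    and U1_def: "U1 = {i. i < N \<and> q i * (vnorm (R *\<^sub>v f i))^2 = c}"
    and card2: "card U1 \<ge> 2"
    and kap: "\<And>i j. i < N \<Longrightarrow> j < N \<Longrightarrow> i \<noteq> j \<Longrightarrow> q i * q j * (cmod ((R *\<^sub>v f i) \<bullet>c (R *\<^sub>v f j)))^2 = \<kappa>"
    and kap0: "\<kappa> \<ge> 0"
begin

definition "Lset m = {\<Lambda>. \<Lambda> \<subseteq> {..<N} \<and> card \<Lambda> = m}"

lemma Lset_fin: "finite (Lset m)"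
  unfolding Lset_def by (rule finite_subset[of _ "Pow {..<N}"]) auto

lemma Rm_eq: "Rm n N p m f G = Max ((\<lambda>\<Lambda>. rad G \<Lambda>) ` Lset m)"
proof -
  have e: "Dset n N p m = (\<lambda>\<Lambda>. mat N N (\<lambda>(i,j). if i = j \<and> i \<in> \<Lambda> then complex_of_real (q i) else 0)) ` Lset m"
    unfolding Dset_def Lset_def q_eq by blast
  have "(\<lambda>D. spectral_radius (synthesis_op n N G * D * analysis_op n N f)) ` Dset n N p m
      = (\<lambda>\<Lambda>. rad G \<Lambda>) ` Lset m"
    unfolding e image_image rad_def Mop_def Dm_def ..
  thus ?thesis unfolding Rm_def by simp
qed

lemma Rm_ge: "\<Lambda> \<subseteq> {..<N} \<Longrightarrow> card \<Lambda> = m \<Longrightarrow> rad G \<Lambda> \<le> Rm n N p m f G"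
  unfolding Rm_eq by (rule Max_ge) (use Lset_fin in \<open>auto simp: Lset_def\<close>)

lemma Rm_le: assumes m: "m \<le> N" and b: "\<And>\<Lambda>. \<Lambda> \<subseteq> {..<N} \<Longrightarrow> card \<Lambda> = m \<Longrightarrow> rad G \<Lambda> \<le> B"
  shows "Rm n N p m f G \<le> B"
proof -
  have "{..<m} \<in> Lset m" unfolding Lset_def using m by auto
  hence ne: "Lset m \<noteq> {}" by auto
  show ?thesis unfolding Rm_eq using Lset_fin ne b by (auto simp: Lset_def)
qed

definition "a i = (vnorm (R *\<^sub>v f i))^2"

lemma a_nonneg: "0 \<le> a i" unfolding a_def by simp

lemma g_diag: "i < N \<Longrightarrow> g i \<bullet>c f i = complex_of_real (a i)"
  unfolding a_def by (rule g_f_diag)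

lemma Nne: "{q i * (vnorm (R *\<^sub>v f i))^2 | i. i < N} \<noteq> {}"
proof -
  have "U1 \<noteq> {}" using card2 by auto
  then obtain i where "i \<in> U1" by auto
  hence "i < N" unfolding U1_def by auto
  thus ?thesis by auto
qed

lemma Nfin: "finite {q i * (vnorm (R *\<^sub>v f i))^2 | i. i < N}" by simp

lemma qa_le: "i < N \<Longrightarrow> q i * a i \<le> c"
  unfolding c_def a_def by (rule Max_ge[OF Nfin]) auto

lemma qa_U1: "i \<in> U1 \<Longrightarrow> q i * a i = c" unfolding U1_def a_def by auto
lemma U1N: "i \<in> U1 \<Longrightarrow> i < N" unfolding U1_def by auto

lemma a_U1: "i \<in> U1 \<Longrightarrow> a i = c / q i"
  using qa_U1 qpos U1N by (metis nonzero_mult_div_cancel_left order_less_irrefl)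

lemma c_nonneg: "0 \<le> c"
proof -
  obtain i where "i \<in> U1" using card2 by (metis card.empty ex_in_conv not_numeral_le_zero)
  thus ?thesis using qa_U1[of i] a_nonneg[of i] qpos[OF U1N] by (metis mult_nonneg_nonneg less_imp_le)
qed

lemma gc': "g i \<in> carrier_vec n" by (rule gc)

lemma g_pair_kappa: assumes i: "i < N" and j: "j < N" and ij: "i \<noteq> j"
  shows "complex_of_real (q i * q j) * (g j \<bullet>c f i) * (g i \<bullet>c f j) = complex_of_real \<kappa>"
proof -
  have "(g j \<bullet>c f i) * (g i \<bullet>c f j) = (g j \<bullet>c f i) * cnj (g j \<bullet>c f i)" using g_f_sym[OF i j] by simp
  also have "\<dots> = complex_of_real ((cmod (g j \<bullet>c f i))^2)" by (simp only: complex_norm_square)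
  also have "cmod (g j \<bullet>c f i) = cmod ((R *\<^sub>v f i) \<bullet>c (R *\<^sub>v f j))"
  proof -
    have a: "R *\<^sub>v f i \<in> carrier_vec n" "R *\<^sub>v f j \<in> carrier_vec n" using Rc fc i j by auto
    have "g j \<bullet>c f i = cnj ((R *\<^sub>v f i) \<bullet>c (R *\<^sub>v f j))"
      unfolding g_f_inner[OF i j] by (rule cinner_conj_sym[OF a(1) a(2)])
    thus ?thesis by simp
  qed
  finally have "complex_of_real (q i * q j) * (g j \<bullet>c f i) * (g i \<bullet>c f j)
     = complex_of_real (q i * q j * (cmod ((R *\<^sub>v f i) \<bullet>c (R *\<^sub>v f j)))^2)"
    by (simp add: mult.assoc)
  thus ?thesis using kap[OF i j ij] by simp
qed

lemma Rm1_canon: "Rm n N p 1 f g = c"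
proof (rule antisym)
  show "Rm n N p 1 f g \<le> c"
  proof (rule Rm_le)
    show "1 \<le> N" using card2 card_mono[OF _ U1sub] by simp
  next
    fix \<Lambda> assume L: "\<Lambda> \<subseteq> {..<N}" and c1: "card \<Lambda> = 1"
    then obtain i where Li: "\<Lambda> = {i}" by (auto simp: card_Suc_eq)
    hence i: "i < N" using L by auto
    show "rad g \<Lambda> \<le> c" unfolding Li rad_single[OF i gc] g_diag[OF i] using qa_le[OF i] a_nonneg[of i] by simp
  qed
next
  obtain i where iU: "i \<in> U1" using card2 by (metis card.empty ex_in_conv not_numeral_le_zero)
  have i: "i < N" using U1N[OF iU] .
  have "c = rad g {i}" unfolding rad_single[OF i gc] g_diag[OF i] using qa_U1[OF iU] a_nonneg[of i] by simp
  also have "\<dots> \<le> Rm n N p 1 f g" by (rule Rm_ge) (use i in auto)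
  finally show "c \<le> Rm n N p 1 f g" .
qed

lemma sumU1_pos: "(\<Sum>i\<in>U1. 1 / q i) > 0"
proof -
  have ne: "U1 \<noteq> {}" using card2 by auto
  show ?thesis by (rule sum_pos[OF U1fin ne]) (use qpos U1N in simp)
qed

lemma T1_canon: assumes G: "is_dual K n N f G"
  shows "(\<Sum>i\<in>U1. G i \<bullet>c f i) = complex_of_real (\<Sum>i\<in>U1. c / q i)"
proof -
  have "(\<Sum>i\<in>U1. G i \<bullet>c f i) = (\<Sum>i\<in>U1. g i \<bullet>c f i)" using T1[OF G] T1[OF canon_dual] by simp
  also have "\<dots> = (\<Sum>i\<in>U1. complex_of_real (c / q i))"
    by (rule sum.cong[OF refl]) (simp add: g_diag U1N a_U1)
  finally show ?thesis by simp
qed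

lemma Rm1_dual_ge: assumes G: "is_dual K n N f G" shows "c \<le> Rm n N p 1 f G"
proof -
  define m where "m = Rm n N p 1 f G"
  have Gc: "\<And>i. i < N \<Longrightarrow> G i \<in> carrier_vec n" using dual_carrier[OF G] .
  have b: "cmod (G i \<bullet>c f i) \<le> m / q i" if i: "i \<in> U1" for i
  proof -
    have iN: "i < N" using U1N[OF i] .
    have "q i * cmod (G i \<bullet>c f i) \<le> m" unfolding m_def rad_single[where G=G and i=i, OF iN Gc[OF iN], symmetric]
      by (rule Rm_ge) (use iN in auto)
    thus ?thesis using qpos[OF iN] by (simp add: field_simps)
  qed
  have "(\<Sum>i\<in>U1. c / q i) = Re (\<Sum>i\<in>U1. G i \<bullet>c f i)" using T1_canon[OF G] by simp
  also have "\<dots> = (\<Sum>i\<in>U1. Re (G i \<bullet>c f i))" by simp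
  also have "\<dots> \<le> (\<Sum>i\<in>U1. m / q i)"
    by (rule sum_mono) (use b complex_Re_le_cmod order_trans in blast)
  finally have "c * (\<Sum>i\<in>U1. 1 / q i) \<le> m * (\<Sum>i\<in>U1. 1 / q i)"
    by (simp add: sum_distrib_left)
  thus ?thesis unfolding m_def using sumU1_pos by simp
qed

lemma canon_opt1: "opt1_dual K n N p f g"
  unfolding opt1_dual_def
proof (intro conjI)
  show "is_dual K n N f g" by (rule canon_dual)
  show "Rm n N p 1 f g = (INF g'\<in>{g'. is_dual K n N f g'}. Rm n N p 1 f g')"
    unfolding Rm1_canon
    by (rule cInf_eq_minimum[symmetric]) (use canon_dual Rm1_canon Rm1_dual_ge in auto)
qed

lemma opt1_Rm1: assumes G: "opt1_dual K n N p f G" shows "Rm n N p 1 f G = c"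
proof -
  have "(INF g'\<in>{g'. is_dual K n N f g'}. Rm n N p 1 f g') = c"
    using canon_opt1 Rm1_canon unfolding opt1_dual_def by simp
  thus ?thesis using G unfolding opt1_dual_def by simp
qed

lemma opt1_diag: assumes G: "opt1_dual K n N p f G" and i: "i \<in> U1"
  shows "G i \<bullet>c f i = complex_of_real (c / q i)"
proof -
  have Gd: "is_dual K n N f G" using G unfolding opt1_dual_def by simp
  have Gc: "\<And>i. i < N \<Longrightarrow> G i \<in> carrier_vec n" using dual_carrier[OF Gd] .
  have b: "cmod (G i \<bullet>c f i) \<le> c / q i" if i: "i \<in> U1" for i
  proof -
    have iN: "i < N" using U1N[OF i] .
    have "q i * cmod (G i \<bullet>c f i) \<le> c" unfolding opt1_Rm1[OF G, symmetric] rad_single[where G=G and i=i, OF iN Gc[OF iN], symmetric]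
      by (rule Rm_ge) (use iN in auto)
    thus ?thesis using qpos[OF iN] by (simp add: field_simps)
  qed
  have s1: "Re (\<Sum>i\<in>U1. G i \<bullet>c f i) = (\<Sum>i\<in>U1. c / q i)" unfolding T1_canon[OF Gd] by simp
  have s2: "(\<Sum>i\<in>U1. Re (G i \<bullet>c f i)) = (\<Sum>i\<in>U1. c / q i)" using s1 by simp
  have z: "(\<Sum>i\<in>U1. c / q i - Re (G i \<bullet>c f i)) = 0" by (simp only: sum_subtractf s2)
  have nn: "\<forall>i\<in>U1. 0 \<le> c / q i - Re (G i \<bullet>c f i)"
  proof
    fix i assume "i \<in> U1"
    from b[OF this] complex_Re_le_cmod[of "G i \<bullet>c f i"] show "0 \<le> c / q i - Re (G i \<bullet>c f i)" by linarith
  qed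
  have "\<forall>i\<in>U1. c / q i - Re (G i \<bullet>c f i) = 0"
    by (subst sum_nonneg_eq_0_iff[OF U1fin, symmetric]) (use nn z in auto)
  hence re: "Re (G i \<bullet>c f i) = c / q i" using i by simp
  have "(cmod (G i \<bullet>c f i))^2 = (Re (G i \<bullet>c f i))^2 + (Im (G i \<bullet>c f i))^2" by (rule cmod_power2)
  moreover have "cmod (G i \<bullet>c f i) \<le> Re (G i \<bullet>c f i)" using b[OF i] re by simp
  moreover have "Re (G i \<bullet>c f i) \<le> cmod (G i \<bullet>c f i)" by (rule complex_Re_le_cmod)
  ultimately have "cmod (G i \<bullet>c f i) = Re (G i \<bullet>c f i)" "(cmod (G i \<bullet>c f i))^2 = (Re (G i \<bullet>c f i))^2 + (Im (G i \<bullet>c f i))^2"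
    by linarith+
  hence "(Im (G i \<bullet>c f i))^2 = 0" by simp
  hence "Im (G i \<bullet>c f i) = 0" by simp
  thus ?thesis using re by (simp add: complex_eq_iff)
qed


lemma N2: "2 \<le> N"
proof -
  have "card U1 \<le> card {..<N}" by (rule card_mono[OF _ U1sub]) simp
  thus ?thesis using card2 by simp
qed

lemma canon_Rm2_le: "Rm n N p 2 f g \<le> c + sqrt \<kappa>"
proof (rule Rm_le[OF N2])
  fix \<Lambda> assume L: "\<Lambda> \<subseteq> {..<N}" and c2: "card \<Lambda> = 2"
  then obtain i j where Lij: "\<Lambda> = {i,j}" and ij: "i \<noteq> j" by (auto simp: card_2_iff)
  have i: "i < N" and j: "j < N" using L Lij by auto
  show "rad g \<Lambda> \<le> c + sqrt \<kappa>" unfolding Lij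
  proof (rule pair_upper[OF i j ij gc gc g_diag[OF i] g_diag[OF j]])
    show "0 \<le> q i * a i" using qpos[OF i] a_nonneg[of i] by simp
    show "q i * a i \<le> c" by (rule qa_le[OF i])
    show "0 \<le> q j * a j" using qpos[OF j] a_nonneg[of j] by simp
    show "q j * a j \<le> c" by (rule qa_le[OF j])
    show "complex_of_real (q i * q j) * (g j \<bullet>c f i) * (g i \<bullet>c f j) = complex_of_real \<kappa>"
      by (rule g_pair_kappa[OF i j ij])
    show "0 \<le> \<kappa>" by (rule kap0)
  qed
qed

lemma offdiag_sum: assumes G: "opt1_dual K n N p f G" and j: "j \<in> U1"
  shows "(\<Sum>i\<in>U1 - {j}. (G j \<bullet>c f i) * (G i \<bullet>c f j)) = complex_of_real (c / q j) - complex_of_real (c / q j) * complex_of_real (c / q j)"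
proof -
  have Gd: "is_dual K n N f G" using G unfolding opt1_dual_def by simp
  have "(\<Sum>i\<in>U1. (G j \<bullet>c f i) * (G i \<bullet>c f j)) = (G j \<bullet>c f j) * (G j \<bullet>c f j) + (\<Sum>i\<in>U1 - {j}. (G j \<bullet>c f i) * (G i \<bullet>c f j))"
    by (rule sum.remove[OF U1fin j])
  moreover have "(\<Sum>i\<in>U1. (G j \<bullet>c f i) * (G i \<bullet>c f j)) = G j \<bullet>c f j" by (rule T2[OF Gd j])
  moreover have "G j \<bullet>c f j = complex_of_real (c / q j)" by (rule opt1_diag[OF G j])
  ultimately show ?thesis by (simp add: algebra_simps)
qed

lemma opt1_Rm2_ge: assumes G: "opt1_dual K n N p f G" shows "c + sqrt \<kappa> \<le> Rm n N p 2 f G"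
proof -
  have Gd: "is_dual K n N f G" using G unfolding opt1_dual_def by simp
  have Gc: "\<And>i. i < N \<Longrightarrow> G i \<in> carrier_vec n" using dual_carrier[OF Gd] .
  obtain j where j: "j \<in> U1" using card2 by (metis card.empty ex_in_conv not_numeral_le_zero)
  have jN: "j < N" using U1N[OF j] .
  have ne: "U1 - {j} \<noteq> {}"
  proof
    assume "U1 - {j} = {}"
    hence "U1 \<subseteq> {j}" by auto
    hence "card U1 \<le> 1" using card_mono[of "{j}" U1] by simp
    thus False using card2 by simp
  qed
  have "\<exists>i\<in>U1 - {j}. \<kappa> \<le> Re (complex_of_real (q i * q j) * ((G j \<bullet>c f i) * (G i \<bullet>c f j)))"
  proof (rule ccontr)
    assume "\<not> ?thesis"
    hence lt: "\<And>i. i \<in> U1 - {j} \<Longrightarrow> Re (complex_of_real (q i * q j) * ((G j \<bullet>c f i) * (G i \<bullet>c f j))) < \<kappa>"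
      by (meson not_le)
    have lt2: "Re ((G j \<bullet>c f i) * (G i \<bullet>c f j)) < Re ((g j \<bullet>c f i) * (g i \<bullet>c f j))" if i: "i \<in> U1 - {j}" for i
    proof -
      have iN: "i < N" using U1N i by auto
      have ij: "i \<noteq> j" using i by auto
      have qq: "q i * q j > 0" using qpos[OF iN] qpos[OF jN] by simp
      have "q i * q j * Re ((G j \<bullet>c f i) * (G i \<bullet>c f j)) < \<kappa>" using lt[OF i] by simp
      moreover have "q i * q j * Re ((g j \<bullet>c f i) * (g i \<bullet>c f j)) = \<kappa>"
        using arg_cong[OF g_pair_kappa[OF iN jN ij], of Re] by (simp add: mult.assoc)
      ultimately show ?thesis using qq by (metis mult_less_cancel_left_pos)
    qed
    have "(\<Sum>i\<in>U1 - {j}. Re ((G j \<bullet>c f i) * (G i \<bullet>c f j))) < (\<Sum>i\<in>U1 - {j}. Re ((g j \<bullet>c f i) * (g i \<bullet>c f j)))"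
      by (rule sum_strict_mono[OF _ ne lt2]) (use U1fin in simp)
    moreover have "(\<Sum>i\<in>U1 - {j}. (G j \<bullet>c f i) * (G i \<bullet>c f j)) = (\<Sum>i\<in>U1 - {j}. (g j \<bullet>c f i) * (g i \<bullet>c f j))"
      using offdiag_sum[OF G j] offdiag_sum[OF canon_opt1 j] by simp
    hence "(\<Sum>i\<in>U1 - {j}. Re ((G j \<bullet>c f i) * (G i \<bullet>c f j))) = (\<Sum>i\<in>U1 - {j}. Re ((g j \<bullet>c f i) * (g i \<bullet>c f j)))"
      by (metis Re_sum)
    ultimately show False by simp
  qed
  then obtain i where i: "i \<in> U1 - {j}" and ky: "\<kappa> \<le> Re (complex_of_real (q i * q j) * ((G j \<bullet>c f i) * (G i \<bullet>c f j)))"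
    by auto
  have iN: "i < N" using U1N i by auto
  have ij: "i \<noteq> j" using i by auto
  have "c + sqrt \<kappa> \<le> rad G {i,j}"
  proof (rule pair_lower[OF iN jN ij Gc[OF iN] Gc[OF jN]])
    show "G i \<bullet>c f i = complex_of_real (c / q i)" using opt1_diag[OF G] i by auto
    show "G j \<bullet>c f j = complex_of_real (c / q j)" by (rule opt1_diag[OF G j])
    show "0 \<le> \<kappa>" by (rule kap0)
    show "\<kappa> \<le> Re (complex_of_real (q i * q j) * (G j \<bullet>c f i) * (G i \<bullet>c f j))"
      using ky by (simp add: mult.assoc)
  qed
  also have "\<dots> \<le> Rm n N p 2 f G" by (rule Rm_ge) (use iN jN ij in auto)
  finally show ?thesis .
qed

lemma canon_opt2: "opt2_dual K n N p f g"
  unfolding opt2_dual_def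
proof (intro conjI)
  show "opt1_dual K n N p f g" by (rule canon_opt1)
  show "Rm n N p 2 f g = (INF g'\<in>{g'. opt1_dual K n N p f g'}. Rm n N p 2 f g')"
  proof (rule cInf_eq_minimum[symmetric])
    show "Rm n N p 2 f g \<in> (\<lambda>g'. Rm n N p 2 f g') ` {g'. opt1_dual K n N p f g'}" using canon_opt1 by auto
  next
    fix x assume "x \<in> (\<lambda>g'. Rm n N p 2 f g') ` {g'. opt1_dual K n N p f g'}"
    then obtain G where G: "opt1_dual K n N p f G" and x: "x = Rm n N p 2 f G" by auto
    show "Rm n N p 2 f g \<le> x" unfolding x using canon_Rm2_le opt1_Rm2_ge[OF G] by linarith
  qed
qed

end


theorem corollary3p1:
  fixes K :: "complex set" and n N :: nat and p :: "nat \<Rightarrow> real" and f :: "nat \<Rightarrow> complex vec"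
  defines "q \<equiv> weight_num n N p"
      and "R \<equiv> inv_sqrt_mat n (frame_op n N f)"
  defines "c \<equiv> Max {q i * (vnorm (R *\<^sub>v f i))^2 | i. i < N}"
  defines "U1 \<equiv> {i. i < N \<and> q i * (vnorm (R *\<^sub>v f i))^2 = c}"
  defines "U2 \<equiv> {..<N} - U1"
  assumes K: "K = \<real> \<or> K = UNIV"
    and n: "0 < n" and nN: "n \<le> N"
    and frame: "is_frame K n N f"
    and prob: "prob_seq N p"
    and welldef: "\<forall>i<N. (\<Sum>j<N. p j) - p i \<noteq> 0"
    and disj: "spanK K n f U1 \<inter> spanK K n f U2 = {0\<^sub>v n}"
    and card: "card U1 \<ge> 2"
    and eq: "\<forall>i<N. \<forall>j<N. i \<noteq> j \<longrightarrow>
        cmod ((R *\<^sub>v f i) \<bullet>c (R *\<^sub>v f j)) =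
        sqrt (1 / (q i * q j) * ((real n - (\<Sum>k<N. 1 / (q k)^2))
                                  / (\<Sum>r<N. \<Sum>s<N. if r \<noteq> s then 1 / (q r * q s) else 0)))"
  shows "opt2_dual K n N p f (\<lambda>i. mat_inv n (frame_op n N f) *\<^sub>v f i)"
proof -
  have Kok: "Kok K" using K unfolding Kok_def .
  have N1: "N \<ge> 1" using n nN by simp
  have sp: "(\<Sum>j<N. p j) = 1" using prob unfolding prob_seq_def by simp
  have N2: "N \<ge> 2"
  proof (rule ccontr)
    assume "\<not> N \<ge> 2"
    hence "N = 1" using N1 by simp
    hence "(\<Sum>j<N. p j) - p 0 = 0" by simp
    thus False using welldef N1 by auto
  qed
  have qpos: "q i > 0" if i: "i < N" for i
  proof -
    have "p i \<le> 1" using prob i unfolding prob_seq_def by auto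
    moreover have "1 - p i \<noteq> 0" using welldef i sp by auto
    ultimately have pi: "1 - p i > 0" by simp
    have "real N - 1 > 0" using N2 by simp
    moreover have "real n > 0" using n by simp
    ultimately show "q i > 0" unfolding q_def weight_num_def sp using pi by simp
  qed
  have U1sub: "U1 \<subseteq> {..<N}" unfolding U1_def by auto
  have disj': "spanK K n f U1 \<inter> spanK K n f ({..<N} - U1) = {0\<^sub>v n}" using disj unfolding U2_def .
  interpret Q: qctx K n N f U1 q
    using Kok frame U1sub disj' qpos n
    by (unfold_locales) auto
  have RR: "R = Q.R" unfolding R_def Q.R_def Q.S_def ..
  define \<kappa> where "\<kappa> = (real n - (\<Sum>k<N. 1 / (q k)^2)) / (\<Sum>r<N. \<Sum>s<N. if r \<noteq> s then 1 / (q r * q s) else 0)"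
  have eq': "cmod ((R *\<^sub>v f i) \<bullet>c (R *\<^sub>v f j)) = sqrt (1 / (q i * q j) * \<kappa>)" if "i < N" "j < N" "i \<noteq> j" for i j
    using eq that unfolding \<kappa>_def by blast
  have k0: "\<kappa> \<ge> 0"
  proof -
    have e01: "cmod ((R *\<^sub>v f 0) \<bullet>c (R *\<^sub>v f 1)) = sqrt (1 / (q 0 * q 1) * \<kappa>)"
      by (rule eq') (use N2 in auto)
    have "0 \<le> sqrt (1 / (q 0 * q 1) * \<kappa>)" unfolding e01[symmetric] by (rule norm_ge_zero)
    hence "0 \<le> 1 / (q 0 * q 1) * \<kappa>" by simp
    moreover have "q 0 * q 1 > 0" using qpos[of 0] qpos[of 1] N2 by simp
    ultimately show ?thesis by (simp add: zero_le_divide_iff)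
  qed
  have kap: "q i * q j * (cmod ((Q.R *\<^sub>v f i) \<bullet>c (Q.R *\<^sub>v f j)))^2 = \<kappa>"
    if i: "i < N" and j: "j < N" and ij: "i \<noteq> j" for i j
  proof -
    have qq: "q i * q j > 0" using qpos[OF i] qpos[OF j] by simp
    have "(cmod ((R *\<^sub>v f i) \<bullet>c (R *\<^sub>v f j)))^2 = 1 / (q i * q j) * \<kappa>"
      unfolding eq'[OF i j ij] using qq k0 by simp
    moreover have "q i \<noteq> 0" "q j \<noteq> 0" using qpos[OF i] qpos[OF j] by auto
    ultimately show ?thesis unfolding RR by simp
  qed
  interpret M: mctx K n N f U1 q p c \<kappa>
  proof (unfold_locales)
    show "q = weight_num n N p" unfolding q_def ..
    show "c = Max {q i * (vnorm (Q.R *\<^sub>v f i))^2 | i. i < N}" unfolding c_def RR ..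
    show "U1 = {i. i < N \<and> q i * (vnorm (Q.R *\<^sub>v f i))^2 = c}" unfolding U1_def RR ..
    show "2 \<le> card U1" by (rule card)
    show "\<And>i j. i < N \<Longrightarrow> j < N \<Longrightarrow> i \<noteq> j \<Longrightarrow> q i * q j * (cmod ((Q.R *\<^sub>v f i) \<bullet>c (Q.R *\<^sub>v f j)))^2 = \<kappa>"
      by (rule kap)
    show "0 \<le> \<kappa>" by (rule k0)
  qed
  have "(\<lambda>i. mat_inv n (frame_op n N f) *\<^sub>v f i) = Q.g" by (rule ext) (simp add: Q.g_def Q.Si_def Q.S_def)
  then show ?thesis using M.canon_opt2 by simp
qed


end
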